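(* There exists a constant $C=C(Q)>0$ with the following property. Let $r>0$, $\sigma\in(0,1)$, and let $g:\partial D_{(1+\sigma)r}\to\mathcal A_Q(\mathbb R^2)$ and $f:\partial D_r\to\mathcal A_Q(\mathbb R^2)$ be Lipschitz with Lipschitz constants $L_g,L_f$. Then there exists a Lipschitz map $h:D_{(1+\sigma)r}\setminus D_r\to\mathcal A_Q(\mathbb R^2)$ with $h=g$ on $\partial D_{(1+\sigma)r}$, $h=f$ on $\partial D_r$, and Lipschitz constant $$L_h\le C\Big(L_f+L_g+\frac1{\sigma r}\sup_{x\in\partial D_r}\mathcal G\big(f(x),g((1+\sigma)x)\big)\Big).$$
   Context: $D_r=(-\tfrac r2,\tfrac r2)^2\subset\mathbb R^2$. $\mathcal A_Q(\mathbb R^2)$ is the space of unordered $Q$-tuples of points of $\mathbb R^2$ with metric $\mathcal G(\sum_i[x_i],\sum_i[y_i])=\min_\sigma(\sum_i|x_i-y_{\sigma(i)}|^2)^{1/2}$ over permutations $\sigma$. *)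

theory Defs
  imports "HOL-Analysis.Analysis" "HOL-Library.Multiset"
begin

type_synonym pt = "real \<times> real"

definition sqD :: "real \<Rightarrow> pt set" where
  "sqD r = {-r/2<..<r/2} \<times> {-r/2<..<r/2}"

text \<open>A_Q(R^2): unordered Q-tuples of points = multisets of size Q.\<close>
definition AQ :: "nat \<Rightarrow> pt multiset set" where
  "AQ Q = {T. size T = Q}"

definition GQ :: "pt multiset \<Rightarrow> pt multiset \<Rightarrow> real" where
  "GQ T S = (let xs = (SOME xs. mset xs = T); ys = (SOME ys. mset ys = S) in
     Min ((\<lambda>\<pi>. sqrt (\<Sum>i<length xs. (norm (xs ! i - ys ! (\<pi> i)))\<^sup>2))
          ` {\<pi>. \<pi> permutes {..<length xs}}))"

definition lipschitz_AQ :: "pt set \<Rightarrow> (pt \<Rightarrow> pt multiset) \<Rightarrow> real \<Rightarrow> bool" where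
  "lipschitz_AQ A h L \<longleftrightarrow> (\<forall>x\<in>A. \<forall>y\<in>A. GQ (h x) (h y) \<le> L * dist x y)"

end

theory Submission
  imports Defs
begin


definition dl :: "pt list \<Rightarrow> pt list \<Rightarrow> real" where
  "dl xs zs = L2_set (\<lambda>i. norm (xs ! i - zs ! i)) {..<length xs}"

lemma dl_nonneg: "0 \<le> dl xs zs"
  by (simp add: dl_def L2_set_nonneg)

lemma dl_perm:
  assumes "p permutes {..<length xs}" "length zs = length xs"
  shows "dl (permute_list p xs) (permute_list p zs) = dl xs zs"
proof -
  have "dl (permute_list p xs) (permute_list p zs)
      = sqrt (\<Sum>i<length xs. (norm (xs ! p i - zs ! p i))\<^sup>2)"
    unfolding dl_def L2_set_def using assms
    by (intro arg_cong[where f=sqrt] sum.cong) (auto simp: permute_list_nth)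
  also have "(\<Sum>i<length xs. (norm (xs ! p i - zs ! p i))\<^sup>2)
      = (\<Sum>i<length xs. (norm (xs ! i - zs ! i))\<^sup>2)"
    using sum.permute[OF assms(1), of "\<lambda>i. (norm (xs ! i - zs ! i))\<^sup>2"] by (simp add: o_def)
  finally show ?thesis by (simp add: dl_def L2_set_def)
qed

lemma someI_mset: "mset (SOME xs. mset xs = T) = T"
  by (rule someI_ex) (rule ex_mset)

lemma GQ_le:
  assumes "mset xs = T" "mset zs = S" "length zs = length xs"
  shows "GQ T S \<le> dl xs zs"
proof -
  define x0 where "x0 = (SOME xs. mset xs = T)"
  define y0 where "y0 = (SOME xs. mset xs = S)"
  have x0: "mset x0 = T" and y0: "mset y0 = S" unfolding x0_def y0_def by (rule someI_mset)+
  have lx: "length x0 = length xs" using x0 assms(1) by (metis size_mset)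
  have ly: "length y0 = length xs" using y0 assms(2,3) by (metis size_mset)
  obtain p where p: "p permutes {..<length x0}" "permute_list p x0 = xs"
    using mset_eq_permutation[of xs x0] x0 assms(1) by auto
  define zs' where "zs' = permute_list (inv p) zs"
  have pinv: "inv p permutes {..<length zs}" using p(1) lx assms(3) by (simp add: permutes_inv)
  have zz: "permute_list p zs' = zs"
    unfolding zs'_def using permute_list_compose[of p zs "inv p"] p(1) lx assms(3)
    by (simp add: permutes_inv_o(2))
  have "dl xs zs = dl (permute_list p x0) (permute_list p zs')" using p zz by simp
  also have "\<dots> = dl x0 zs'" using dl_perm[OF p(1)] lx assms(3) by (simp add: zs'_def)
  finally have e1: "dl xs zs = dl x0 zs'" .
  have "mset zs' = mset y0" unfolding zs'_def using pinv assms(2) y0 by simp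
  then obtain q where q: "q permutes {..<length y0}" "permute_list q y0 = zs'"
    using mset_eq_permutation[of zs' y0] by auto
  have "dl x0 zs' = sqrt (\<Sum>i<length x0. (norm (x0 ! i - y0 ! (q i)))\<^sup>2)"
    unfolding dl_def L2_set_def using q lx ly
    by (intro arg_cong[where f=sqrt] sum.cong) (auto simp: permute_list_nth)
  moreover have "q permutes {..<length x0}" using q lx ly by simp
  ultimately have "dl x0 zs' \<in> (\<lambda>\<pi>. sqrt (\<Sum>i<length x0. (norm (x0 ! i - y0 ! (\<pi> i)))\<^sup>2))
          ` {\<pi>. \<pi> permutes {..<length x0}}" by auto
  then have "Min ((\<lambda>\<pi>. sqrt (\<Sum>i<length x0. (norm (x0 ! i - y0 ! (\<pi> i)))\<^sup>2))
          ` {\<pi>. \<pi> permutes {..<length x0}}) \<le> dl x0 zs'"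
    by (intro Min_le) (auto intro: finite_permutations)
  then show ?thesis using e1 unfolding GQ_def x0_def y0_def Let_def by simp
qed

lemma GQ_attained:
  assumes "mset xs = T" "size S = size T"
  shows "\<exists>zs. mset zs = S \<and> GQ T S = dl xs zs"
proof -
  define x0 where "x0 = (SOME xs. mset xs = T)"
  define y0 where "y0 = (SOME xs. mset xs = S)"
  have x0: "mset x0 = T" and y0: "mset y0 = S" unfolding x0_def y0_def by (rule someI_mset)+
  have lx: "length x0 = length xs" using x0 assms(1) by (metis size_mset)
  have ly: "length y0 = length xs" using y0 assms by (metis size_mset)
  define F where "F = (\<lambda>\<pi>. sqrt (\<Sum>i<length x0. (norm (x0 ! i - y0 ! (\<pi> i)))\<^sup>2))"
  have fin: "finite {\<pi>. \<pi> permutes {..<length x0}}" by (rule finite_permutations) simp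
  have "Min (F ` {\<pi>. \<pi> permutes {..<length x0}}) \<in> F ` {\<pi>. \<pi> permutes {..<length x0}}"
    using fin by (intro Min_in) (auto intro: exI[of _ id])
  then obtain \<pi> where pi: "\<pi> permutes {..<length x0}" and
    GQe: "GQ T S = F \<pi>" unfolding GQ_def x0_def y0_def Let_def F_def by auto
  have pi': "\<pi> permutes {..<length y0}" using pi lx ly by simp
  define z0 where "z0 = permute_list \<pi> y0"
  have "F \<pi> = dl x0 z0" unfolding F_def dl_def L2_set_def z0_def using pi' lx ly
    by (intro arg_cong[where f=sqrt] sum.cong) (auto simp: permute_list_nth)
  obtain p where p: "p permutes {..<length x0}" "permute_list p x0 = xs"
    using mset_eq_permutation[of xs x0] x0 assms(1) by auto
  have lz: "length z0 = length x0" using lx ly z0_def by simp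
  have "dl xs (permute_list p z0) = dl x0 z0" using dl_perm[OF p(1) lz] p(2) by simp
  moreover have "mset (permute_list p z0) = S" using p(1) lz pi' y0 z0_def by simp
  ultimately show ?thesis using GQe \<open>F \<pi> = dl x0 z0\<close> by metis
qed

lemma dl_sym: "length zs = length xs \<Longrightarrow> dl xs zs = dl zs xs"
  unfolding dl_def by (simp add: norm_minus_commute)

lemma GQ_attained2:
  assumes "size S = size T"
  shows "\<exists>xs zs. mset xs = T \<and> mset zs = S \<and> GQ T S = dl xs zs"
  using GQ_attained[OF _ assms] ex_mset[of T] by blast

lemma GQ_nonneg: "size S = size T \<Longrightarrow> 0 \<le> GQ T S"
  using GQ_attained2[of S T] dl_nonneg by metis

lemma GQ_self: "GQ T T = 0"
proof -
  obtain xs where xs: "mset xs = T" using ex_mset by blast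
  have "GQ T T \<le> dl xs xs" by (rule GQ_le[OF xs xs]) simp
  moreover have "dl xs xs = 0" by (simp add: dl_def L2_set_def)
  ultimately show ?thesis using GQ_nonneg[of T T] by simp
qed

lemma GQ_sym_le: "size S = size T \<Longrightarrow> GQ S T \<le> GQ T S"
proof -
  assume sz: "size S = size T"
  obtain xs zs where h: "mset xs = T" "mset zs = S" "GQ T S = dl xs zs"
    using GQ_attained2[OF sz] by blast
  have l: "length zs = length xs" using h sz by (metis size_mset)
  have "GQ S T \<le> dl zs xs" by (rule GQ_le) (use h l in auto)
  then show ?thesis using h dl_sym[OF l] by simp
qed

lemma GQ_sym: "size S = size T \<Longrightarrow> GQ S T = GQ T S"
  using GQ_sym_le[of S T] GQ_sym_le[of T S] by simp

lemma dl_triangle: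
  assumes "length ys = length xs" "length zs = length xs"
  shows "dl xs zs \<le> dl xs ys + dl ys zs"
proof -
  have "dl xs zs \<le> L2_set (\<lambda>i. norm (xs ! i - ys ! i) + norm (ys ! i - zs ! i)) {..<length xs}"
    unfolding dl_def
    by (rule L2_set_mono) (metis diff_add_cancel add_diff_eq norm_triangle_ineq, simp)
  also have "\<dots> \<le> dl xs ys + dl ys zs"
    unfolding dl_def using assms by (simp add: L2_set_triangle_ineq)
  finally show ?thesis .
qed

lemma GQ_triangle:
  assumes "size S = size T" "size U = size T"
  shows "GQ T U \<le> GQ T S + GQ S U"
proof -
  obtain xs ys where h: "mset xs = T" "mset ys = S" "GQ T S = dl xs ys"
    using GQ_attained2[OF assms(1)] by blast
  obtain zs where h2: "mset zs = U" "GQ S U = dl ys zs"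
    using GQ_attained[OF h(2)] assms by auto
  have l: "length ys = length xs" "length zs = length xs" using h h2 assms by (metis size_mset)+
  have "GQ T U \<le> dl xs zs" by (rule GQ_le) (use h h2 l in auto)
  also have "\<dots> \<le> dl xs ys + dl ys zs" by (rule dl_triangle[OF l])
  finally show ?thesis using h h2 by simp
qed

lemma dl_nth_le: "i < length xs \<Longrightarrow> norm (xs ! i - zs ! i) \<le> dl xs zs"
  unfolding dl_def by (rule member_le_L2_set) auto

lemma GQ_eq0:
  assumes "size S = size T" "GQ T S = 0"
  shows "T = S"
proof -
  obtain xs zs where h: "mset xs = T" "mset zs = S" "GQ T S = dl xs zs"
    using GQ_attained2[OF assms(1)] by blast
  have l: "length zs = length xs" using h assms by (metis size_mset)
  have "xs = zs"
    using dl_nth_le[of _ xs zs] h assms(2) l by (intro nth_equalityI) auto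
  then show ?thesis using h by simp
qed

lemma dl_map_le:
  assumes "length zs = length xs" "\<And>i. i < length xs \<Longrightarrow> norm (f (xs ! i) - g (zs ! i)) \<le> c * norm (xs ! i - zs ! i)" "0 \<le> c"
  shows "dl (map f xs) (map g zs) \<le> c * dl xs zs"
proof -
  have "dl (map f xs) (map g zs) \<le> L2_set (\<lambda>i. c * norm (xs ! i - zs ! i)) {..<length xs}"
    unfolding dl_def length_map using assms by (intro L2_set_mono) auto
  also have "\<dots> = c * dl xs zs" unfolding dl_def using L2_set_right_distrib[OF assms(3)] by metis
  finally show ?thesis .
qed



lemma GQ_image_le:
  assumes "mset xs = T" "mset zs = S" "length zs = length xs"
  shows "GQ (image_mset f T) (image_mset g S) \<le> dl (map f xs) (map g zs)"
  by (rule GQ_le) (use assms in \<open>auto simp: mset_map\<close>)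

lemma GQ_near:
  assumes "size S = size T" "GQ S T \<le> M" "p \<in># S"
  shows "\<exists>q. q \<in># T \<and> dist p q \<le> M"
proof -
  obtain xs zs where h: "mset xs = S" "mset zs = T" "GQ S T = dl xs zs"
    using GQ_attained2[of T S] assms(1) by auto
  have l: "length zs = length xs" using h assms by (metis size_mset)
  obtain i where i: "i < length xs" "p = xs ! i" using assms(3) h(1) by (metis in_set_conv_nth set_mset_mset)
  have "dist p (zs ! i) \<le> M" using dl_nth_le[OF i(1), of zs] h assms i by (simp add: dist_norm)
  moreover have "zs ! i \<in># T" using h(2) i l by (metis nth_mem set_mset_mset)
  ultimately show ?thesis by blast
qed

definition opt_pair :: "pt multiset \<Rightarrow> pt multiset \<Rightarrow> pt list \<times> pt list" where
  "opt_pair T S = (SOME (xs, zs). mset xs = T \<and> mset zs = S \<and> GQ T S = dl xs zs)"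

definition interp :: "pt multiset \<Rightarrow> pt multiset \<Rightarrow> real \<Rightarrow> pt multiset" where
  "interp T S \<tau> = mset (map2 (\<lambda>p q. p + \<tau> *\<^sub>R (q - p)) (fst (opt_pair T S)) (snd (opt_pair T S)))"

lemma opt_pair:
  assumes "size S = size T"
  shows "mset (fst (opt_pair T S)) = T \<and> mset (snd (opt_pair T S)) = S \<and> GQ T S = dl (fst (opt_pair T S)) (snd (opt_pair T S))"
proof -
  obtain xs zs where "mset xs = T \<and> mset zs = S \<and> GQ T S = dl xs zs"
    using GQ_attained2[OF assms] by blast
  then have "\<exists>p. (case p of (xs, zs) \<Rightarrow> mset xs = T \<and> mset zs = S \<and> GQ T S = dl xs zs)" by auto
  from someI_ex[OF this] show ?thesis unfolding opt_pair_def by (auto split: prod.splits)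
qed

lemma interp_props:
  assumes "size S = size T"
  shows "size (interp T S \<tau>) = size T" "interp T S 0 = T" "interp T S 1 = S"
    "GQ (interp T S \<tau>) (interp T S \<tau>') \<le> \<bar>\<tau> - \<tau>'\<bar> * GQ T S"
proof -
  define xs where "xs = fst (opt_pair T S)"
  define zs where "zs = snd (opt_pair T S)"
  have h: "mset xs = T" "mset zs = S" "GQ T S = dl xs zs" using opt_pair[OF assms] unfolding xs_def zs_def by blast+
  have l: "length zs = length xs" using h assms by (metis size_mset)
  have I: "interp T S t = mset (map2 (\<lambda>p q. p + t *\<^sub>R (q - p)) xs zs)" for t
    unfolding interp_def xs_def zs_def by (rule refl)
  have sT: "size T = length xs" using h(1) by auto
  show "size (interp T S \<tau>) = size T" unfolding I sT using l by simp
  have "map2 (\<lambda>p q. p + 0 *\<^sub>R (q - p)) xs zs = xs" using l by (intro nth_equalityI) auto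
  then show "interp T S 0 = T" unfolding I using h by simp
  have "map2 (\<lambda>p q. p + 1 *\<^sub>R (q - p)) xs zs = zs" using l by (intro nth_equalityI) auto
  then show "interp T S 1 = S" unfolding I using h by simp
  have "GQ (interp T S \<tau>) (interp T S \<tau>') \<le> dl (map2 (\<lambda>p q. p + \<tau> *\<^sub>R (q - p)) xs zs) (map2 (\<lambda>p q. p + \<tau>' *\<^sub>R (q - p)) xs zs)"
    unfolding I by (rule GQ_le) (use l in auto)
  also have "\<dots> = L2_set (\<lambda>i. \<bar>\<tau> - \<tau>'\<bar> * norm (xs ! i - zs ! i)) {..<length xs}"
    unfolding dl_def using l
  proof (intro L2_set_cong)
    fix i assume "i \<in> {..<length xs}"
    then have "(xs ! i + \<tau> *\<^sub>R (zs ! i - xs ! i)) - (xs ! i + \<tau>' *\<^sub>R (zs ! i - xs ! i)) = (\<tau> - \<tau>') *\<^sub>R (zs ! i - xs ! i)"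
      by (simp add: algebra_simps)
    then show "norm (map2 (\<lambda>p q. p + \<tau> *\<^sub>R (q - p)) xs zs ! i - map2 (\<lambda>p q. p + \<tau>' *\<^sub>R (q - p)) xs zs ! i) = \<bar>\<tau> - \<tau>'\<bar> * norm (xs ! i - zs ! i)"
      using \<open>i \<in> {..<length xs}\<close> l by (simp add: norm_minus_commute)
  qed simp
  also have "\<dots> = \<bar>\<tau> - \<tau>'\<bar> * GQ T S" unfolding h dl_def
    by (simp add: L2_set_right_distrib)
  finally show "GQ (interp T S \<tau>) (interp T S \<tau>') \<le> \<bar>\<tau> - \<tau>'\<bar> * GQ T S" .
qed


lemma cluster_scale:
  fixes P :: "pt set" and M :: real
  assumes "finite P" "card P \<le> Q" "M > 0"
  shows "\<exists>s. 5 * M \<le> s \<and> s \<le> 5 * M * 2 ^ (Q * Q) \<and>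
             (\<forall>p\<in>P. \<forall>q\<in>P. \<not> (s \<le> dist p q \<and> dist p q < 2 * s))"
proof -
  define D where "D = (\<lambda>(p, q). dist p q) ` (P \<times> P)"
  have finD: "finite D" unfolding D_def using assms(1) by auto
  have cD: "card D \<le> Q * Q"
  proof -
    have "card D \<le> card (P \<times> P)" unfolding D_def by (rule card_image_le) (use assms(1) in auto)
    also have "\<dots> = card P * card P" by (simp add: card_cartesian_product)
    also have "\<dots> \<le> Q * Q" using assms(2) by (simp add: mult_le_mono)
    finally show ?thesis .
  qed
  define sc where "sc = (\<lambda>k::nat. 5 * M * 2 ^ k)"
  define B where "B = (\<lambda>d. {k. k \<le> Q * Q \<and> sc k \<le> d \<and> d < 2 * sc k})"
  have B1: "card (B d) \<le> 1" for d
  proof -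
    have "k = k'" if "k \<in> B d" "k' \<in> B d" for k k'
    proof (rule ccontr)
      assume "k \<noteq> k'"
      then consider "k < k'" | "k' < k" by linarith
      then show False
      proof cases
        case 1
        then have "2 * sc k \<le> sc k'" unfolding sc_def using assms(3)
          by (simp add: mult.commute) (metis Suc_leI mult.commute power_Suc power_increasing_iff mult_le_cancel_left_pos
              mult_pos_pos one_less_numeral_iff semiring_norm(76) zero_less_numeral mult.assoc)
        then show False using that unfolding B_def by auto
      next
        case 2
        then have "2 * sc k' \<le> sc k" unfolding sc_def using assms(3)
          by (simp add: mult.commute) (metis Suc_leI mult.commute power_Suc power_increasing_iff mult_le_cancel_left_pos
              mult_pos_pos one_less_numeral_iff semiring_norm(76) zero_less_numeral mult.assoc)
        then show False using that unfolding B_def by auto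
      qed
    qed
    moreover have "finite (B d)" unfolding B_def by auto
    ultimately show ?thesis using card_le_Suc0_iff_eq[of "B d"] by auto
  qed
  have "card (\<Union>d\<in>D. B d) \<le> (\<Sum>d\<in>D. card (B d))" by (rule card_UN_le[OF finD])
  also have "\<dots> \<le> (\<Sum>d\<in>D. 1)" by (rule sum_mono) (rule B1)
  also have "\<dots> = card D" by simp
  finally have "card (\<Union>d\<in>D. B d) < card {0..Q * Q}" using cD by simp
  then have "\<not> {0..Q * Q} \<subseteq> (\<Union>d\<in>D. B d)"
  proof (intro notI)
    assume sub: "{0..Q * Q} \<subseteq> (\<Union>d\<in>D. B d)"
    have "finite (\<Union>d\<in>D. B d)" using finD unfolding B_def by auto
    then have "card {0..Q * Q} \<le> card (\<Union>d\<in>D. B d)" using sub by (rule card_mono)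
    then show False using \<open>card (\<Union>d\<in>D. B d) < card {0..Q * Q}\<close> by linarith
  qed
  then obtain k where k0: "k \<in> {0..Q * Q}" "k \<notin> (\<Union>d\<in>D. B d)" by blast
  then have k: "k \<le> Q * Q" "\<forall>d\<in>D. k \<notin> B d" by auto
  show ?thesis
  proof (intro exI[of _ "sc k"] conjI ballI)
    show "5 * M \<le> sc k" unfolding sc_def using assms(3) by simp
    have "(2::real) ^ k \<le> 2 ^ (Q * Q)" using k(1) by (simp add: power_increasing)
    then show "sc k \<le> 5 * M * 2 ^ (Q * Q)" unfolding sc_def using assms(3) by simp
    fix p q assume "p \<in> P" "q \<in> P"
    then have "dist p q \<in> D" unfolding D_def by auto
    then show "\<not> (sc k \<le> dist p q \<and> dist p q < 2 * sc k)" using k unfolding B_def by auto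
  qed
qed


definition good :: "pt multiset \<Rightarrow> real \<Rightarrow> real \<Rightarrow> bool" where
  "good T M s \<longleftrightarrow> M > 0 \<and> 5 * M \<le> s \<and> (\<forall>p\<in>#T. \<forall>q\<in>#T. \<not> (s \<le> dist p q \<and> dist p q < 2 * s))"

definition kap :: "pt multiset \<Rightarrow> real \<Rightarrow> real \<Rightarrow> pt \<Rightarrow> pt" where
  "kap T M s p = (SOME q. q \<in># T \<and> dist p q < s + M)"

definition psi :: "pt multiset \<Rightarrow> real \<Rightarrow> real \<Rightarrow> real \<Rightarrow> pt \<Rightarrow> pt" where
  "psi T M s l p = kap T M s p + l *\<^sub>R (p - kap T M s p)"

lemma kap_mem:
  assumes "good T M s" "q \<in># T" "dist p q \<le> M"
  shows "kap T M s p \<in># T \<and> dist p (kap T M s p) < s + M"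
proof -
  have "q \<in># T \<and> dist p q < s + M" using assms unfolding good_def by auto
  then show ?thesis unfolding kap_def by (rule someI)
qed

lemma good_A:
  assumes "good T M s" "q \<in># T" "z \<in># T" "dist p q \<le> M"
  shows "dist p z < s + M \<longleftrightarrow> dist q z < s"
proof
  assume "dist p z < s + M"
  then have "dist q z < 2 * s" using dist_triangle[of q z p] assms(1,4) unfolding good_def
    by (simp add: dist_commute)
  then show "dist q z < s" using assms(1-3) unfolding good_def by (meson not_le)
next
  assume "dist q z < s"
  then show "dist p z < s + M" using dist_triangle[of p z q] assms(4) by linarith
qed

lemma good_B:
  assumes "good T M s" "q \<in># T" "q' \<in># T" "z \<in># T" "dist q q' < s"
  shows "dist q z < s \<longleftrightarrow> dist q' z < s"
proof
  assume "dist q z < s"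
  then have "dist q' z < 2 * s" using dist_triangle[of q' z q] assms(5) by (simp add: dist_commute)
  then show "dist q' z < s" using assms(1,3,4) unfolding good_def by (meson not_le)
next
  assume "dist q' z < s"
  then have "dist q z < 2 * s" using dist_triangle[of q z q'] assms(5) by (simp add: dist_commute)
  then show "dist q z < s" using assms(1,2,4) unfolding good_def by (meson not_le)
qed

lemma kap_eq:
  assumes "good T M s" "q \<in># T" "q' \<in># T" "dist p q \<le> M" "dist p' q' \<le> M" "dist p p' \<le> 2 * M"
  shows "kap T M s p = kap T M s p'"
proof -
  have qq: "dist q q' < s"
  proof -
    have "dist q q' \<le> dist q p + dist p q'" by (rule dist_triangle)
    also have "dist p q' \<le> dist p p' + dist p' q'" by (rule dist_triangle)
    finally have "dist q q' \<le> 4 * M" using assms(4-6) by (simp add: dist_commute)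
    then show ?thesis using assms(1) unfolding good_def by linarith
  qed
  have "(\<lambda>z. z \<in># T \<and> dist p z < s + M) = (\<lambda>z. z \<in># T \<and> dist p' z < s + M)"
  proof (rule ext)
    fix z
    show "(z \<in># T \<and> dist p z < s + M) = (z \<in># T \<and> dist p' z < s + M)"
      using good_A[OF assms(1,2) _ assms(4), of z] good_A[OF assms(1,3) _ assms(5), of z]
        good_B[OF assms(1,2,3) _ qq, of z] by blast
  qed
  then show ?thesis unfolding kap_def by simp
qed

lemma core_c:
  assumes "good T M s" "size S = size T" "GQ S T \<le> M"
  shows "image_mset (kap T M s) S = image_mset (kap T M s) T"
proof -
  obtain xs zs where h: "mset xs = S" "mset zs = T" "GQ S T = dl xs zs"
    using GQ_attained2[of T S] assms(2) by auto
  have l: "length zs = length xs" using h assms by (metis size_mset)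
  have "map (kap T M s) xs = map (kap T M s) zs"
  proof (rule nth_equalityI)
    fix i assume i: "i < length (map (kap T M s) xs)"
    then have i': "i < length xs" by simp
    have zi: "zs ! i \<in># T" using h(2) i' l by (metis nth_mem set_mset_mset)
    have d: "dist (xs ! i) (zs ! i) \<le> M" using dl_nth_le[OF i', of zs] h assms(3) by (simp add: dist_norm)
    have "kap T M s (xs ! i) = kap T M s (zs ! i)"
      by (rule kap_eq[OF assms(1) zi zi d]) (use d assms(1) in \<open>auto simp: good_def\<close>)
    then show "map (kap T M s) xs ! i = map (kap T M s) zs ! i" using i' l by simp
  qed (use l in simp)
  then show ?thesis using h by (metis mset_map)
qed

lemma core_d: "image_mset (psi T M s 1) S = S"
proof -
  have "psi T M s 1 = id" by (simp add: fun_eq_iff psi_def)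
  then show ?thesis by simp
qed

lemma psi0: "psi T M s 0 = kap T M s"
  by (simp add: psi_def fun_eq_iff)

lemma core_b:
  fixes M s l l' :: real
  assumes "good T M s" "size S = size T" "GQ S T \<le> M"
  shows "GQ (image_mset (psi T M s l) S) (image_mset (psi T M s l') S) \<le> \<bar>l - l'\<bar> * (real (size T) * (s + M))"
proof -
  obtain xs where xs: "mset xs = S" using ex_mset by blast
  have "GQ (image_mset (psi T M s l) S) (image_mset (psi T M s l') S) \<le> dl (map (psi T M s l) xs) (map (psi T M s l') xs)"
    by (rule GQ_image_le[OF xs xs]) simp
  also have "\<dots> \<le> (\<Sum>i<length xs. norm (map (psi T M s l) xs ! i - map (psi T M s l') xs ! i))"
    unfolding dl_def length_map by (rule L2_set_le_sum) simp
  also have "\<dots> \<le> (\<Sum>i<length xs. \<bar>l - l'\<bar> * (s + M))"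
  proof (rule sum_mono)
    fix i assume "i \<in> {..<length xs}"
    then have i: "i < length xs" by simp
    have "xs ! i \<in># S" using xs i by (metis nth_mem set_mset_mset)
    then obtain q where q: "q \<in># T" "dist (xs ! i) q \<le> M" using GQ_near[OF assms(2,3)] by blast
    have k: "dist (xs ! i) (kap T M s (xs ! i)) < s + M" using kap_mem[OF assms(1) q] by blast
    have "map (psi T M s l) xs ! i - map (psi T M s l') xs ! i = (l - l') *\<^sub>R (xs ! i - kap T M s (xs ! i))"
      using i by (simp add: psi_def algebra_simps)
    then have "norm (map (psi T M s l) xs ! i - map (psi T M s l') xs ! i) = \<bar>l - l'\<bar> * dist (xs ! i) (kap T M s (xs ! i))"
      by (simp add: dist_norm)
    also have "\<dots> \<le> \<bar>l - l'\<bar> * (s + M)" using k by (intro mult_left_mono) auto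
    finally show "norm (map (psi T M s l) xs ! i - map (psi T M s l') xs ! i) \<le> \<bar>l - l'\<bar> * (s + M)" .
  qed
  also have "\<dots> = \<bar>l - l'\<bar> * (real (size T) * (s + M))" using xs assms(2) by auto
  finally show ?thesis .
qed

lemma core_a:
  assumes "good T M s" "size S = size T" "GQ S T \<le> M" "size S' = size T" "GQ S' T \<le> M"
  shows "GQ (image_mset (psi T M s l) S) (image_mset (psi T M s l) S') \<le> \<bar>l\<bar> * GQ S S'"
proof -
  obtain xs zs where h: "mset xs = S" "mset zs = S'" "GQ S S' = dl xs zs"
    using GQ_attained2[of S' S] assms by auto
  have l: "length zs = length xs" using h assms by (metis size_mset)
  have SS: "GQ S S' \<le> 2 * M"
  proof -
    have "GQ S S' \<le> GQ S T + GQ T S'" by (rule GQ_triangle) (use assms in auto)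
    also have "GQ T S' = GQ S' T" by (rule GQ_sym) (use assms in auto)
    finally show ?thesis using assms by linarith
  qed
  have "GQ (image_mset (psi T M s l) S) (image_mset (psi T M s l) S') \<le> dl (map (psi T M s l) xs) (map (psi T M s l) zs)"
    by (rule GQ_image_le[OF h(1,2) l])
  also have "\<dots> \<le> \<bar>l\<bar> * dl xs zs"
  proof (rule dl_map_le[OF l])
    fix i assume i: "i < length xs"
    have xi: "xs ! i \<in># S" using h i by (metis nth_mem set_mset_mset)
    have zi: "zs ! i \<in># S'" using h i l by (metis nth_mem set_mset_mset)
    obtain q where q: "q \<in># T" "dist (xs ! i) q \<le> M" using GQ_near[OF assms(2,3) xi] by blast
    obtain q' where q': "q' \<in># T" "dist (zs ! i) q' \<le> M" using GQ_near[OF assms(4,5) zi] by blast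
    have d: "dist (xs ! i) (zs ! i) \<le> 2 * M" using dl_nth_le[OF i, of zs] h SS by (simp add: dist_norm)
    have "kap T M s (xs ! i) = kap T M s (zs ! i)" by (rule kap_eq[OF assms(1) q(1) q'(1) q(2) q'(2) d])
    then have "psi T M s l (xs ! i) - psi T M s l (zs ! i) = l *\<^sub>R (xs ! i - zs ! i)"
      by (simp add: psi_def algebra_simps)
    then show "norm (psi T M s l (xs ! i) - psi T M s l (zs ! i)) \<le> \<bar>l\<bar> * norm (xs ! i - zs ! i)" by simp
  qed simp
  finally show ?thesis using h by simp
qed




lemma dist_le_abs: "dist (x::pt) y \<le> \<bar>fst x - fst y\<bar> + \<bar>snd x - snd y\<bar>"
  unfolding dist_prod_def dist_real_def using sqrt_sum_squares_le_sum_abs[of "fst x - fst y" "snd x - snd y"] by simp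

lemma abs_fst_le: "\<bar>fst x - fst y\<bar> \<le> dist (x::pt) y"
  using dist_fst_le[of x y] by (simp add: dist_real_def)

lemma abs_snd_le: "\<bar>snd x - snd y\<bar> \<le> dist (x::pt) y"
  using dist_snd_le[of x y] by (simp add: dist_real_def)

lemma card_set_mset_le: "card (set_mset T) \<le> size T"
proof -
  obtain xs where "mset xs = T" using ex_mset by blast
  then show ?thesis using card_length[of xs] by auto
qed

definition rect :: "real \<Rightarrow> real \<Rightarrow> real \<Rightarrow> real \<Rightarrow> pt set" where
  "rect u0 u1 t0 t1 = {u0..u1} \<times> {t0..t1}"

definition rbd :: "real \<Rightarrow> real \<Rightarrow> real \<Rightarrow> real \<Rightarrow> pt set" where
  "rbd u0 u1 t0 t1 = {x \<in> rect u0 u1 t0 t1. fst x = u0 \<or> fst x = u1 \<or> snd x = t0 \<or> snd x = t1}"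

definition CQ :: "nat \<Rightarrow> real" where
  "CQ Q = 60 * (real Q + 1) * 2 ^ (Q * Q)"

lemma CQ_pos: "CQ Q > 0" unfolding CQ_def by simp

lemma gauge_facts:
  fixes c1 c2 h1 h2 :: real
  assumes "h1 > 0" "h2 > 0"
  and g_def: "g = (\<lambda>x::pt. max (\<bar>fst x - c1\<bar> / h1) (\<bar>snd x - c2\<bar> / h2))"
  shows "x \<in> rect (c1 - h1) (c1 + h1) (c2 - h2) (c2 + h2) \<longleftrightarrow> g x \<le> 1"
    and "x \<in> rbd (c1 - h1) (c1 + h1) (c2 - h2) (c2 + h2) \<longleftrightarrow> g x = 1"
    and "\<bar>g x - g x'\<bar> \<le> dist x x' / min h1 h2"
    and "g x = 0 \<longleftrightarrow> x = (c1, c2)"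
    and "0 \<le> t \<Longrightarrow> g ((c1, c2) + t *\<^sub>R (x - (c1, c2))) = t * g x"
    and "g x \<ge> 0"
proof -
  have e1: "\<bar>a\<bar> / h \<le> 1 \<longleftrightarrow> \<bar>a\<bar> \<le> h" "\<bar>a\<bar> / h = 1 \<longleftrightarrow> \<bar>a\<bar> = h" if "h > 0" for a h :: real
    using that by (auto simp: divide_le_eq_1 divide_eq_1_iff)
  have R: "x \<in> rect (c1 - h1) (c1 + h1) (c2 - h2) (c2 + h2) \<longleftrightarrow> \<bar>fst x - c1\<bar> \<le> h1 \<and> \<bar>snd x - c2\<bar> \<le> h2"
    unfolding rect_def by (cases x) (auto simp: abs_le_iff)
  show "x \<in> rect (c1 - h1) (c1 + h1) (c2 - h2) (c2 + h2) \<longleftrightarrow> g x \<le> 1"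
    unfolding R g_def using e1(1)[OF assms(1)] e1(1)[OF assms(2)] by simp
  have B: "x \<in> rbd (c1 - h1) (c1 + h1) (c2 - h2) (c2 + h2) \<longleftrightarrow> (\<bar>fst x - c1\<bar> \<le> h1 \<and> \<bar>snd x - c2\<bar> \<le> h2) \<and> (\<bar>fst x - c1\<bar> = h1 \<or> \<bar>snd x - c2\<bar> = h2)"
    unfolding rbd_def R[symmetric] using assms(1,2) by (cases x) (auto simp: abs_if rect_def split: if_splits)
  show "x \<in> rbd (c1 - h1) (c1 + h1) (c2 - h2) (c2 + h2) \<longleftrightarrow> g x = 1"
    unfolding B g_def using e1[OF assms(1), of "fst x - c1"] e1[OF assms(2), of "snd x - c2"]
    by (auto simp: max_def split: if_splits)
  have m: "min h1 h2 > 0" using assms by simp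
  have a1: "\<bar>\<bar>fst x - c1\<bar> / h1 - \<bar>fst x' - c1\<bar> / h1\<bar> \<le> dist x x' / min h1 h2"
  proof -
    have "\<bar>\<bar>fst x - c1\<bar> / h1 - \<bar>fst x' - c1\<bar> / h1\<bar> = \<bar>\<bar>fst x - c1\<bar> - \<bar>fst x' - c1\<bar>\<bar> / h1"
      using assms by (simp add: diff_divide_distrib[symmetric])
    also have "\<dots> \<le> \<bar>fst x - fst x'\<bar> / h1" using assms by (intro divide_right_mono) auto
    also have "\<dots> \<le> dist x x' / h1" using assms abs_fst_le by (intro divide_right_mono) auto
    also have "\<dots> \<le> dist x x' / min h1 h2" using assms m by (intro divide_left_mono) (auto simp: min_def)
    finally show ?thesis .
  qed
  have a2: "\<bar>\<bar>snd x - c2\<bar> / h2 - \<bar>snd x' - c2\<bar> / h2\<bar> \<le> dist x x' / min h1 h2"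
  proof -
    have "\<bar>\<bar>snd x - c2\<bar> / h2 - \<bar>snd x' - c2\<bar> / h2\<bar> = \<bar>\<bar>snd x - c2\<bar> - \<bar>snd x' - c2\<bar>\<bar> / h2"
      using assms by (simp add: diff_divide_distrib[symmetric])
    also have "\<dots> \<le> \<bar>snd x - snd x'\<bar> / h2" using assms by (intro divide_right_mono) auto
    also have "\<dots> \<le> dist x x' / h2" using assms abs_snd_le by (intro divide_right_mono) auto
    also have "\<dots> \<le> dist x x' / min h1 h2" using assms m by (intro divide_left_mono) (auto simp: min_def)
    finally show ?thesis .
  qed
  show "\<bar>g x - g x'\<bar> \<le> dist x x' / min h1 h2"
    unfolding g_def using a1 a2 by (simp add: max_def abs_le_iff)
  show "g x = 0 \<longleftrightarrow> x = (c1, c2)"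
  proof
    assume "g x = 0"
    then have "\<bar>fst x - c1\<bar> / h1 \<le> 0" "\<bar>snd x - c2\<bar> / h2 \<le> 0" unfolding g_def by auto
    then have "\<bar>fst x - c1\<bar> \<le> 0" "\<bar>snd x - c2\<bar> \<le> 0" using assms by (auto simp: divide_le_0_iff)
    then show "x = (c1, c2)" by (cases x) auto
  qed (auto simp: g_def)
  show "0 \<le> t \<Longrightarrow> g ((c1, c2) + t *\<^sub>R (x - (c1, c2))) = t * g x"
    unfolding g_def using assms by (cases x) (simp add: abs_mult max_mult_distrib_left times_divide_eq_right)
  show "g x \<ge> 0" unfolding g_def using assms by (simp add: le_max_iff_disj)
qed


lemma cone:
  fixes \<phi> :: "pt \<Rightarrow> pt multiset" and \<Lambda> u0 u1 t0 t1 :: real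
  assumes uv: "u0 < u1" "t0 < t1" "u1 - u0 \<le> 2 * (t1 - t0)" "t1 - t0 \<le> 2 * (u1 - u0)" and Lpos: "0 \<le> \<Lambda>"
    and sz: "\<forall>y\<in>rbd u0 u1 t0 t1. size (\<phi> y) = Q"
    and L: "\<forall>y\<in>rbd u0 u1 t0 t1. \<forall>y'\<in>rbd u0 u1 t0 t1. GQ (\<phi> y) (\<phi> y') \<le> \<Lambda> * dist y y'"
  shows "\<exists>\<Phi>. (\<forall>x\<in>rect u0 u1 t0 t1. size (\<Phi> x) = Q) \<and> (\<forall>y\<in>rbd u0 u1 t0 t1. \<Phi> y = \<phi> y) \<and>
     (\<forall>x\<in>rect u0 u1 t0 t1. \<forall>x'\<in>rect u0 u1 t0 t1. GQ (\<Phi> x) (\<Phi> x') \<le> CQ Q * \<Lambda> * dist x x')"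
proof -
  define c1 where "c1 = (u0 + u1) / 2"
  define c2 where "c2 = (t0 + t1) / 2"
  define h1 where "h1 = (u1 - u0) / 2"
  define h2 where "h2 = (t1 - t0) / 2"
  have h1p: "h1 > 0" and h2p: "h2 > 0" using uv unfolding h1_def h2_def by auto
  have u: "u0 = c1 - h1" "u1 = c1 + h1" "t0 = c2 - h2" "t1 = c2 + h2"
    unfolding c1_def c2_def h1_def h2_def by (simp_all add: field_simps)
  define g where "g = (\<lambda>x::pt. max (\<bar>fst x - c1\<bar> / h1) (\<bar>snd x - c2\<bar> / h2))"
  note gf = gauge_facts[OF h1p h2p g_def]
  define c where "c = (c1, c2)"
  define m where "m = min h1 h2"
  define H where "H = max h1 h2"
  have mp: "m > 0" using h1p h2p m_def by simp
  have Hm: "H \<le> 2 * m" using uv unfolding H_def m_def h1_def h2_def by (auto simp: min_def max_def)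
  have mH: "m \<le> H" unfolding H_def m_def by simp
  have y0: "(u0, t0) \<in> rbd u0 u1 t0 t1" using uv unfolding rbd_def rect_def by auto
  have rbd_rect: "rbd u0 u1 t0 t1 \<subseteq> rect u0 u1 t0 t1" unfolding rbd_def by auto
  have distR: "dist y y' \<le> 4 * H" if "y \<in> rect u0 u1 t0 t1" "y' \<in> rect u0 u1 t0 t1" for y y'
  proof -
    have "\<bar>fst y - fst y'\<bar> \<le> 2 * h1" "\<bar>snd y - snd y'\<bar> \<le> 2 * h2"
      using that unfolding rect_def u by (auto simp: abs_le_iff)
    then show ?thesis using dist_le_abs[of y y'] unfolding H_def by linarith
  qed
  have normc: "norm (y - c) \<le> 2 * H" if "y \<in> rect u0 u1 t0 t1" for y
  proof -
    have "\<bar>fst y - c1\<bar> \<le> h1" "\<bar>snd y - c2\<bar> \<le> h2"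
      using that unfolding rect_def u by (auto simp: abs_le_iff)
    then show ?thesis using dist_le_abs[of y c] unfolding H_def c_def by (simp add: dist_norm)
  qed
  show ?thesis
  proof (cases "\<Lambda> = 0")
    case True
    have eq: "\<phi> y = \<phi> (u0, t0)" if "y \<in> rbd u0 u1 t0 t1" for y
    proof -
      have s1: "size (\<phi> y) = size (\<phi> (u0, t0))" using sz y0 that by simp
      have "GQ (\<phi> (u0, t0)) (\<phi> y) \<le> 0" using L y0 that True by simp
      moreover have "GQ (\<phi> (u0, t0)) (\<phi> y) \<ge> 0" by (rule GQ_nonneg[OF s1])
      ultimately have "GQ (\<phi> (u0, t0)) (\<phi> y) = 0" by simp
      then show ?thesis using GQ_eq0[OF s1] by simp
    qed
    show ?thesis
    proof (intro exI[of _ "\<lambda>_. \<phi> (u0, t0)"] conjI ballI)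
      fix x assume "x \<in> rect u0 u1 t0 t1" then show "size (\<phi> (u0, t0)) = Q" using sz y0 by simp
    next
      fix y assume "y \<in> rbd u0 u1 t0 t1" then show "\<phi> (u0, t0) = \<phi> y" using eq by simp
    next
      fix x x' show "GQ (\<phi> (u0, t0)) (\<phi> (u0, t0)) \<le> CQ Q * \<Lambda> * dist x x'" using True GQ_self by simp
    qed
  next
    case False
    then have Lp: "\<Lambda> > 0" using Lpos by simp
    define M where "M = 4 * \<Lambda> * H"
    have Mp: "M > 0" unfolding M_def using Lp mp mH by simp
    define T where "T = \<phi> (u0, t0)"
    have szT: "size T = Q" using sz y0 T_def by simp
    obtain s where s: "5 * M \<le> s" "s \<le> 5 * M * 2 ^ (Q * Q)"
      "\<forall>p\<in>set_mset T. \<forall>q\<in>set_mset T. \<not> (s \<le> dist p q \<and> dist p q < 2 * s)"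
      using cluster_scale[of "set_mset T" Q M] card_set_mset_le[of T] szT Mp by auto
    have gd: "good T M s" unfolding good_def using s Mp by auto
    have near: "GQ (\<phi> y) T \<le> M" if "y \<in> rbd u0 u1 t0 t1" for y
    proof -
      have "GQ (\<phi> y) T \<le> \<Lambda> * dist y (u0, t0)" using L that y0 T_def by auto
      also have "\<dots> \<le> \<Lambda> * (4 * H)" using distR[of y "(u0, t0)"] that y0 rbd_rect Lp by (intro mult_left_mono) auto
      finally show ?thesis unfolding M_def by simp
    qed
    define yof where "yof = (\<lambda>x. c + (1 / g x) *\<^sub>R (x - c))"
    define \<Phi> where "\<Phi> = (\<lambda>x. if x = c then image_mset (kap T M s) T
                              else image_mset (psi T M s (g x)) (\<phi> (yof x)))"
    have rect_eq: "rect u0 u1 t0 t1 = {x. g x \<le> 1}" using gf(1) unfolding u by auto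
    have rbd_eq: "rbd u0 u1 t0 t1 = {x. g x = 1}" using gf(2) unfolding u by auto
    have gc: "g x = 0 \<longleftrightarrow> x = c" for x using gf(4) c_def by simp
    have gnn: "g x \<ge> 0" for x using gf(6) by simp
    have yof1: "g (yof x) = 1" and yofx: "x = c + g x *\<^sub>R (yof x - c)" if "x \<noteq> c" for x
    proof -
      have gp: "g x > 0" using gc[of x] gnn[of x] that by auto
      show "g (yof x) = 1" unfolding yof_def c_def using gf(5)[of "1 / g x" x] gp by simp
      show "x = c + g x *\<^sub>R (yof x - c)" unfolding yof_def using gp by simp
    qed
    have yof_rbd: "yof x \<in> rbd u0 u1 t0 t1" if "x \<noteq> c" for x using yof1[OF that] rbd_eq by simp
    have yof_id: "yof y = y" if "g y = 1" for y unfolding yof_def using that by simp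
    have szPhi: "size (\<Phi> x) = Q" for x
      unfolding \<Phi>_def using szT sz yof_rbd by auto
    have bd: "\<Phi> y = \<phi> y" if "y \<in> rbd u0 u1 t0 t1" for y
    proof -
      have g1: "g y = 1" using that rbd_eq by simp
      then have "y \<noteq> c" using gc[of y] by auto
      then show ?thesis unfolding \<Phi>_def using g1 yof_id[OF g1] core_d by simp
    qed
    define A where "A = real Q * (s + M)"
    have A0: "A \<ge> 0" unfolding A_def using s Mp by simp
    have szS: "size (\<phi> (yof x)) = size T" if "x \<noteq> c" for x using sz yof_rbd[OF that] szT by simp
    have nearS: "GQ (\<phi> (yof x)) T \<le> M" if "x \<noteq> c" for x using near yof_rbd[OF that] by simp
    have one_c: "GQ (\<Phi> c) (\<Phi> x') \<le> \<bar>g c - g x'\<bar> * A" if "x' \<noteq> c" for x'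
    proof -
      have "\<Phi> c = image_mset (psi T M s 0) (\<phi> (yof x'))"
        unfolding \<Phi>_def psi0 using core_c[OF gd szS[OF that] nearS[OF that]] by simp
      moreover have "\<Phi> x' = image_mset (psi T M s (g x')) (\<phi> (yof x'))" unfolding \<Phi>_def using that by simp
      ultimately have "GQ (\<Phi> c) (\<Phi> x') \<le> \<bar>0 - g x'\<bar> * (real (size T) * (s + M))"
        using core_b[OF gd szS[OF that] nearS[OF that], of 0 "g x'"] by simp
      then show ?thesis using gc[of c] szT unfolding A_def by simp
    qed
    have key: "GQ (\<Phi> x) (\<Phi> x') \<le> \<bar>g x - g x'\<bar> * (A + 2 * H * \<Lambda>) + \<Lambda> * dist x x'"
      if xr: "x \<in> rect u0 u1 t0 t1" and xr': "x' \<in> rect u0 u1 t0 t1" for x x'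
    proof (cases "x = c")
      case xc: True
      show ?thesis
      proof (cases "x' = c")
        case True
        then show ?thesis using xc GQ_self[of "\<Phi> c"] Lp A0 mH mp by (simp add: zero_le_mult_iff)
      next
        case False
        have "GQ (\<Phi> x) (\<Phi> x') \<le> \<bar>g x - g x'\<bar> * A" using one_c[OF False] xc by simp
        also have "\<dots> \<le> \<bar>g x - g x'\<bar> * (A + 2 * H * \<Lambda>)" using Lp mH mp by (intro mult_left_mono) auto
        finally show ?thesis using Lp by (simp add: add_increasing2)
      qed
    next
      case xnc: False
      show ?thesis
      proof (cases "x' = c")
        case True
        have "GQ (\<Phi> x) (\<Phi> x') = GQ (\<Phi> x') (\<Phi> x)" using szPhi GQ_sym by metis
        also have "\<dots> \<le> \<bar>g x' - g x\<bar> * A" using one_c[OF xnc] True by simp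
        also have "\<dots> \<le> \<bar>g x - g x'\<bar> * (A + 2 * H * \<Lambda>)" using Lp mH mp by (subst abs_minus_commute) (intro mult_left_mono, auto)
        finally show ?thesis using Lp by (simp add: add_increasing2)
      next
        case xnc': False
        define y where "y = yof x"
        define y' where "y' = yof x'"
        define z where "z = c + g x' *\<^sub>R (y - c)"
        have Px: "\<Phi> x = image_mset (psi T M s (g x)) (\<phi> y)" unfolding \<Phi>_def y_def using xnc by simp
        have Px': "\<Phi> x' = image_mset (psi T M s (g x')) (\<phi> y')" unfolding \<Phi>_def y'_def using xnc' by simp
        have yr: "y \<in> rbd u0 u1 t0 t1" "y' \<in> rbd u0 u1 t0 t1" using yof_rbd xnc xnc' y_def y'_def by auto
        have szs: "size (image_mset (psi T M s (g x')) (\<phi> y)) = size T" "size (image_mset (psi T M s (g x)) (\<phi> y)) = size T"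
           "size (image_mset (psi T M s (g x')) (\<phi> y')) = size T" using szS xnc xnc' y_def y'_def by auto
        have "GQ (\<Phi> x) (\<Phi> x') \<le> GQ (\<Phi> x) (image_mset (psi T M s (g x')) (\<phi> y)) + GQ (image_mset (psi T M s (g x')) (\<phi> y)) (\<Phi> x')"
          unfolding Px Px' by (rule GQ_triangle) (use szs in auto)
        also have "GQ (\<Phi> x) (image_mset (psi T M s (g x')) (\<phi> y)) \<le> \<bar>g x - g x'\<bar> * A"
          unfolding Px A_def using core_b[OF gd szS[OF xnc] nearS[OF xnc], of "g x" "g x'"] szT y_def by simp
        also have "GQ (image_mset (psi T M s (g x')) (\<phi> y)) (\<Phi> x') \<le> \<bar>g x'\<bar> * GQ (\<phi> y) (\<phi> y')"
          unfolding Px' y_def y'_def by (rule core_a[OF gd szS[OF xnc] nearS[OF xnc] szS[OF xnc'] nearS[OF xnc']])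
        also have "\<bar>g x'\<bar> * GQ (\<phi> y) (\<phi> y') \<le> g x' * (\<Lambda> * dist y y')"
          using L yr gnn[of x'] by (simp add: mult_left_mono)
        also have "g x' * (\<Lambda> * dist y y') = \<Lambda> * dist z x'"
        proof -
          have e: "dist (c + l' *\<^sub>R (y - c)) (c + l' *\<^sub>R (y' - c)) = dist (l' *\<^sub>R (y - c)) (l' *\<^sub>R (y' - c))" for l'
            by (rule dist_add_cancel)
          have "x' = c + g x' *\<^sub>R (y' - c)" using yofx[OF xnc'] y'_def by simp
          then have "dist z x' = dist (g x' *\<^sub>R (y - c)) (g x' *\<^sub>R (y' - c))" unfolding z_def using e[of "g x'"] by metis
          also have "\<dots> = g x' * dist y y'" using gnn[of x'] by (simp add: dist_norm algebra_simps flip: scaleR_diff_right)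
          finally show ?thesis by simp
        qed
        also have "\<Lambda> * dist z x' \<le> \<Lambda> * (\<bar>g x - g x'\<bar> * (2 * H) + dist x x')"
        proof -
          have e: "dist (c + l' *\<^sub>R (y - c)) (c + l *\<^sub>R (y - c)) = dist (l' *\<^sub>R (y - c)) (l *\<^sub>R (y - c))" for l l'
            by (rule dist_add_cancel)
          have "x = c + g x *\<^sub>R (y - c)" using yofx[OF xnc] y_def by simp
          then have "dist z x = dist (g x' *\<^sub>R (y - c)) (g x *\<^sub>R (y - c))" unfolding z_def using e[of "g x'" "g x"] by metis
          also have "\<dots> = \<bar>g x - g x'\<bar> * norm (y - c)" by (simp add: dist_norm flip: scaleR_diff_left) (simp add: abs_minus_commute)
          also have "\<dots> \<le> \<bar>g x - g x'\<bar> * (2 * H)" using normc[of y] yr rbd_rect by (intro mult_left_mono) auto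
          finally have "dist z x \<le> \<bar>g x - g x'\<bar> * (2 * H)" .
          then have "dist z x' \<le> \<bar>g x - g x'\<bar> * (2 * H) + dist x x'" using dist_triangle[of z x' x] by linarith
          then show ?thesis using Lp by (intro mult_left_mono) auto
        qed
        finally show ?thesis by (simp add: algebra_simps)
      qed
    qed
    have fin: "GQ (\<Phi> x) (\<Phi> x') \<le> CQ Q * \<Lambda> * dist x x'"
      if xr: "x \<in> rect u0 u1 t0 t1" and xr': "x' \<in> rect u0 u1 t0 t1" for x x'
    proof -
      define K2 :: real where "K2 = 2 ^ (Q * Q)"
      have K21: "K2 \<ge> 1" unfolding K2_def by simp
      have gd': "\<bar>g x - g x'\<bar> \<le> dist x x' / m" using gf(3) m_def by simp
      have "M \<le> M * K2" using K21 Mp by simp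
      then have sM: "s + M \<le> 6 * M * K2" using s(2) unfolding K2_def by simp
      have "A \<le> real Q * (6 * M * K2)" unfolding A_def using sM by (intro mult_left_mono) auto
      also have "\<dots> = real Q * 24 * \<Lambda> * K2 * H" unfolding M_def by simp
      also have "\<dots> \<le> real Q * 24 * \<Lambda> * K2 * (2 * m)" using Hm Lp K21 by (intro mult_left_mono) auto
      finally have Ab: "A \<le> m * (48 * real Q * K2 * \<Lambda>)" by (simp add: algebra_simps)
      have Hb: "2 * H * \<Lambda> \<le> m * (4 * \<Lambda>)" using Hm Lp by (simp add: mult_right_mono)
      have "\<bar>g x - g x'\<bar> * (A + 2 * H * \<Lambda>) \<le> (dist x x' / m) * (m * ((48 * real Q * K2 + 4) * \<Lambda>))"
      proof -
        have "A + 2 * H * \<Lambda> \<le> m * ((48 * real Q * K2 + 4) * \<Lambda>)" using Ab Hb by (simp add: algebra_simps)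
        moreover have "0 \<le> A + 2 * H * \<Lambda>" using A0 Lp mH mp by simp
        ultimately show ?thesis using gd' by (intro mult_mono) auto
      qed
      also have "\<dots> = dist x x' * ((48 * real Q * K2 + 4) * \<Lambda>)" using mp by simp
      finally have "GQ (\<Phi> x) (\<Phi> x') \<le> dist x x' * ((48 * real Q * K2 + 4) * \<Lambda>) + \<Lambda> * dist x x'"
        using key[OF xr xr'] by linarith
      also have "\<dots> = (48 * real Q * K2 + 5) * \<Lambda> * dist x x'" by (simp add: algebra_simps)
      also have "\<dots> \<le> CQ Q * \<Lambda> * dist x x'"
      proof -
        have "0 \<le> K2 * (real Q * 12)" using K21 by simp
        then have "5 \<le> K2 * 60 + K2 * (real Q * 12)" using K21 by linarith
        then have "48 * real Q * K2 + 5 \<le> 60 * (real Q + 1) * K2" by (simp add: algebra_simps)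
        then show ?thesis unfolding CQ_def K2_def using Lp by (intro mult_right_mono) auto
      qed
      finally show ?thesis .
    qed
    show ?thesis by (rule exI[of _ \<Phi>]) (use szPhi bd fin in auto)
  qed
qed




lemma interval_glue:
  fixes u :: "real \<Rightarrow> pt multiset" and K b :: real
  assumes "\<forall>t\<in>{a..b}. size (u t) = Q" "K \<ge> 0"
  shows "finite F \<Longrightarrow> \<forall>A\<in>F. closed A \<Longrightarrow> {a..b} \<subseteq> \<Union>F \<Longrightarrow> a \<le> b \<Longrightarrow>
    \<forall>A\<in>F. \<forall>t\<in>A \<inter> {a..b}. \<forall>t'\<in>A \<inter> {a..b}. GQ (u t) (u t') \<le> K * \<bar>t - t'\<bar> \<Longrightarrow>
    GQ (u a) (u b) \<le> K * (b - a)"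
  using assms
proof (induction "card F" arbitrary: F a rule: less_induct)
  case less
  note F = less.prems
  obtain A where A: "A \<in> F" "a \<in> A" using F(3,4) by auto
  define S where "S = A \<inter> {a..b}"
  have Sne: "S \<noteq> {}" using A F(4) S_def by auto
  have Sb: "bdd_above S" unfolding S_def by (rule bdd_aboveI[of _ b]) auto
  have Sc: "closed S" unfolding S_def using F(2) A by auto
  define ts where "ts = Sup S"
  have tsS: "ts \<in> S" unfolding ts_def by (rule closed_contains_Sup[OF Sne Sb Sc])
  have aS: "a \<in> S" using A F(4) S_def by auto
  have ats: "a \<le> ts" unfolding ts_def using aS Sb by (simp add: cSup_upper)
  have tsb: "ts \<le> b" using tsS S_def by auto
  have szu: "\<forall>t\<in>{a..b}. size (u t) = Q" using F(6) .
  have g1: "GQ (u a) (u ts) \<le> K * (ts - a)"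
  proof -
    have "GQ (u a) (u ts) \<le> K * \<bar>a - ts\<bar>" using F(5) A(1) tsS aS unfolding S_def by blast
    then show ?thesis using ats by simp
  qed
  show ?case
  proof (cases "ts = b")
    case True then show ?thesis using g1 by simp
  next
    case False
    then have tsb': "ts < b" using tsb by simp
    define F' where "F' = F - {A}"
    have cF': "card F' < card F" unfolding F'_def using A(1) F(1) by (metis card_Diff1_less)
    have sub1: "{ts<..b} \<subseteq> \<Union>F'"
    proof
      fix t assume t: "t \<in> {ts<..b}"
      then have "t \<notin> A"
      proof -
        { assume "t \<in> A" then have "t \<in> S" using t ats S_def by auto
          then have "t \<le> ts" unfolding ts_def using Sb by (simp add: cSup_upper) }
        then show ?thesis using t by auto
      qed
      moreover have "t \<in> {a..b}" using t ats by auto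
      then have "t \<in> \<Union>F" using F(3) by blast
      ultimately show "t \<in> \<Union>F'" unfolding F'_def by auto
    qed
    have clF': "closed (\<Union>F')" using F(1,2) unfolding F'_def by auto
    have "{ts..b} = closure {ts<..b}" using tsb' by simp
    also have "\<dots> \<subseteq> \<Union>F'" by (rule closure_minimal[OF sub1 clF'])
    finally have sub2: "{ts..b} \<subseteq> \<Union>F'" .
    have "GQ (u ts) (u b) \<le> K * (b - ts)"
    proof (rule less.hyps[OF cF'])
      show "finite F'" using F(1) F'_def by simp
      show "\<forall>A\<in>F'. closed A" using F(2) F'_def by simp
      show "{ts..b} \<subseteq> \<Union>F'" by (rule sub2)
      show "ts \<le> b" by (rule tsb)
      show "\<forall>A\<in>F'. \<forall>t\<in>A \<inter> {ts..b}. \<forall>t'\<in>A \<inter> {ts..b}. GQ (u t) (u t') \<le> K * \<bar>t - t'\<bar>"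
        using F(5) ats unfolding F'_def by fastforce
      show "\<forall>t\<in>{ts..b}. size (u t) = Q" using szu ats by auto
      show "K \<ge> 0" by (rule F(7))
    qed
    moreover have "GQ (u a) (u b) \<le> GQ (u a) (u ts) + GQ (u ts) (u b)"
      by (rule GQ_triangle) (use szu ats tsb F(4) in auto)
    ultimately show ?thesis using g1 by (simp add: algebra_simps)
  qed
qed

lemma plane_glue:
  fixes h :: "pt \<Rightarrow> pt multiset" and K :: real and S :: "pt set"
  assumes "convex S" "finite F" "\<forall>P\<in>F. closed P" "S \<subseteq> \<Union>F" "K \<ge> 0"
    "\<forall>P\<in>F. \<forall>x\<in>P \<inter> S. \<forall>y\<in>P \<inter> S. GQ (h x) (h y) \<le> K * dist x y"
    "\<forall>x\<in>S. size (h x) = Q"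
    "x \<in> S" "y \<in> S"
  shows "GQ (h x) (h y) \<le> K * dist x y"
proof -
  define \<gamma> where "\<gamma> = (\<lambda>t::real. x + t *\<^sub>R (y - x))"
  define u where "u = h \<circ> \<gamma>"
  have seg: "\<gamma> t \<in> S" if "t \<in> {0..1}" for t
  proof -
    have "\<gamma> t = (1 - t) *\<^sub>R x + t *\<^sub>R y" unfolding \<gamma>_def by (simp add: algebra_simps)
    then show ?thesis using convexD_alt[OF assms(1,8,9)] that by auto
  qed
  have cont: "continuous (at t) \<gamma>" for t unfolding \<gamma>_def by (intro continuous_intros)
  define F1 where "F1 = (\<lambda>P. \<gamma> -` P) ` F"
  have dg: "dist (\<gamma> t) (\<gamma> t') = \<bar>t - t'\<bar> * dist x y" for t t'
  proof -
    have "\<gamma> t - \<gamma> t' = (t - t') *\<^sub>R (y - x)" unfolding \<gamma>_def by (simp add: algebra_simps)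
    then show ?thesis by (simp add: dist_norm norm_minus_commute)
  qed
  have "GQ (u 0) (u 1) \<le> (K * dist x y) * (1 - 0)"
  proof (rule interval_glue)
    show "\<forall>t\<in>{0..1}. size (u t) = Q" using seg assms(7) u_def by simp
    show "K * dist x y \<ge> 0" using assms(5) by simp
    show "finite F1" using assms(2) F1_def by simp
    show "\<forall>A\<in>F1. closed A" using assms(3) cont unfolding F1_def by (auto intro: continuous_closed_vimage)
    show "{0..1} \<subseteq> \<Union>F1" using seg assms(4) unfolding F1_def by fastforce
    show "(0::real) \<le> 1" by simp
    show "\<forall>A\<in>F1. \<forall>t\<in>A \<inter> {0..1}. \<forall>t'\<in>A \<inter> {0..1}. GQ (u t) (u t') \<le> K * dist x y * \<bar>t - t'\<bar>"
    proof (intro ballI)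
      fix A t t' assume "A \<in> F1" "t \<in> A \<inter> {0..1}" "t' \<in> A \<inter> {0..1}"
      then obtain P where P: "P \<in> F" "\<gamma> t \<in> P" "\<gamma> t' \<in> P" "t \<in> {0..1}" "t' \<in> {0..1}" unfolding F1_def by auto
      have "GQ (u t) (u t') \<le> K * dist (\<gamma> t) (\<gamma> t')" using assms(6) P seg unfolding u_def by simp
      then show "GQ (u t) (u t') \<le> K * dist x y * \<bar>t - t'\<bar>" using dg by (simp add: algebra_simps)
    qed
  qed
  then show ?thesis unfolding u_def \<gamma>_def by simp
qed


lemma dist_same_snd: "snd p = snd q \<Longrightarrow> dist (p::pt) q = \<bar>fst p - fst q\<bar>"
  by (cases p, cases q) (simp add: dist_Pair_Pair dist_real_def)

lemma dist_same_fst: "fst p = fst q \<Longrightarrow> dist (p::pt) q = \<bar>snd p - snd q\<bar>"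
  by (cases p, cases q) (simp add: dist_Pair_Pair dist_real_def)

lemma rbd_lip:
  fixes B Tp Lf Rt :: "real \<Rightarrow> pt multiset" and K0 M0 :: real
  assumes uv: "u0 < u1" "t0 < t1" and K0: "K0 \<ge> 0" and M0: "M0 \<ge> 0"
    and cor: "B u0 = Lf t0" "B u1 = Rt t0" "Tp u0 = Lf t1" "Tp u1 = Rt t1"
    and lB: "\<forall>u\<in>{u0..u1}. \<forall>u'\<in>{u0..u1}. GQ (B u) (B u') \<le> K0 * \<bar>u - u'\<bar>"
    and lT: "\<forall>u\<in>{u0..u1}. \<forall>u'\<in>{u0..u1}. GQ (Tp u) (Tp u') \<le> K0 * \<bar>u - u'\<bar>"
    and lL: "\<forall>t\<in>{t0..t1}. \<forall>t'\<in>{t0..t1}. GQ (Lf t) (Lf t') \<le> K0 * \<bar>t - t'\<bar>"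
    and lR: "\<forall>t\<in>{t0..t1}. \<forall>t'\<in>{t0..t1}. GQ (Rt t) (Rt t') \<le> K0 * \<bar>t - t'\<bar>"
    and sB: "\<forall>u\<in>{u0..u1}. size (B u) = Q \<and> GQ (B u) T0 \<le> M0"
    and sT: "\<forall>u\<in>{u0..u1}. size (Tp u) = Q \<and> GQ (Tp u) T0 \<le> M0"
    and sL: "\<forall>t\<in>{t0..t1}. size (Lf t) = Q \<and> GQ (Lf t) T0 \<le> M0"
    and sR: "\<forall>t\<in>{t0..t1}. size (Rt t) = Q \<and> GQ (Rt t) T0 \<le> M0"
    and sT0: "size T0 = Q"
    and phi: "\<phi> = (\<lambda>y. if snd y = t0 then B (fst y) else if snd y = t1 then Tp (fst y)
                       else if fst y = u0 then Lf (snd y) else Rt (snd y))"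
  shows "\<forall>y\<in>rbd u0 u1 t0 t1. size (\<phi> y) = Q \<and> GQ (\<phi> y) T0 \<le> M0"
    and "\<forall>y\<in>rbd u0 u1 t0 t1. \<forall>y'\<in>rbd u0 u1 t0 t1.
           GQ (\<phi> y) (\<phi> y') \<le> (2 * K0 + 2 * M0 / min (u1 - u0) (t1 - t0)) * dist y y'"
proof -
  define onB where "onB = (\<lambda>y::pt. snd y = t0 \<and> u0 \<le> fst y \<and> fst y \<le> u1)"
  define onT where "onT = (\<lambda>y::pt. snd y = t1 \<and> u0 \<le> fst y \<and> fst y \<le> u1)"
  define onL where "onL = (\<lambda>y::pt. fst y = u0 \<and> t0 \<le> snd y \<and> snd y \<le> t1)"
  define onR where "onR = (\<lambda>y::pt. fst y = u1 \<and> t0 \<le> snd y \<and> snd y \<le> t1)"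
  have rb: "y \<in> rbd u0 u1 t0 t1 \<longleftrightarrow> onB y \<or> onT y \<or> onL y \<or> onR y" for y
    unfolding rbd_def rect_def onB_def onT_def onL_def onR_def using uv by (cases y) auto
  have pB: "onB y \<Longrightarrow> \<phi> y = B (fst y)" for y unfolding phi onB_def by simp
  have pT: "onT y \<Longrightarrow> \<phi> y = Tp (fst y)" for y unfolding phi onT_def using uv by simp
  have pL: "onL y \<Longrightarrow> \<phi> y = Lf (snd y)" for y unfolding phi onL_def using uv cor by auto
  have pR: "onR y \<Longrightarrow> \<phi> y = Rt (snd y)" for y unfolding phi onR_def using uv cor by auto
  have szn: "size (\<phi> y) = Q \<and> GQ (\<phi> y) T0 \<le> M0" if ym: "y \<in> rbd u0 u1 t0 t1" for y
  proof -
    consider "onB y" | "onT y" | "onL y" | "onR y" using ym[unfolded rb] by blast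
    then show ?thesis
    proof cases
      case 1 have "fst y \<in> {u0..u1}" using \<open>onB y\<close> unfolding onB_def by simp
        then show ?thesis using pB[OF \<open>onB y\<close>] sB by simp
    next
      case 2 have "fst y \<in> {u0..u1}" using \<open>onT y\<close> unfolding onT_def by simp
        then show ?thesis using pT[OF \<open>onT y\<close>] sT by simp
    next
      case 3 have "snd y \<in> {t0..t1}" using \<open>onL y\<close> unfolding onL_def by simp
        then show ?thesis using pL[OF \<open>onL y\<close>] sL by simp
    next
      case 4 have "snd y \<in> {t0..t1}" using \<open>onR y\<close> unfolding onR_def by simp
        then show ?thesis using pR[OF \<open>onR y\<close>] sR by simp
    qed
  qed
  then show "\<forall>y\<in>rbd u0 u1 t0 t1. size (\<phi> y) = Q \<and> GQ (\<phi> y) T0 \<le> M0" by blast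
  define ss where "ss = (\<lambda>p q. (onB p \<and> onB q) \<or> (onT p \<and> onT q) \<or> (onL p \<and> onL q) \<or> (onR p \<and> onR q))"
  have SS: "GQ (\<phi> p) (\<phi> q) \<le> K0 * dist p q" if sspq: "ss p q" for p q
  proof -
    have A: "\<And>f a b c d. \<forall>u\<in>{a..b}. \<forall>u'\<in>{a..b}. GQ (f u) (f u') \<le> K0 * \<bar>u - u'\<bar> \<Longrightarrow> c \<in> {a..b} \<Longrightarrow> d \<in> {a..b}
         \<Longrightarrow> \<bar>c - d\<bar> \<le> dist p q \<Longrightarrow> GQ (f c) (f d) \<le> K0 * dist p q"
    proof -
      fix f :: "real \<Rightarrow> pt multiset" and a b c d :: real
      assume h: "\<forall>u\<in>{a..b}. \<forall>u'\<in>{a..b}. GQ (f u) (f u') \<le> K0 * \<bar>u - u'\<bar>" "c \<in> {a..b}" "d \<in> {a..b}" "\<bar>c - d\<bar> \<le> dist p q"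
      have "GQ (f c) (f d) \<le> K0 * \<bar>c - d\<bar>" using h(1-3) by blast
      also have "\<dots> \<le> K0 * dist p q" by (rule mult_left_mono[OF h(4) K0])
      finally show "GQ (f c) (f d) \<le> K0 * dist p q" .
    qed
    consider "onB p \<and> onB q" | "onT p \<and> onT q" | "onL p \<and> onL q" | "onR p \<and> onR q" using sspq unfolding ss_def by blast
    then show ?thesis
    proof cases
      case 1 then show ?thesis using A[OF lB, of "fst p" "fst q"] pB abs_fst_le[of p q] unfolding onB_def by auto
    next
      case 2 then show ?thesis using A[OF lT, of "fst p" "fst q"] pT abs_fst_le[of p q] unfolding onT_def by auto
    next
      case 3 then show ?thesis using A[OF lL, of "snd p" "snd q"] pL abs_snd_le[of p q] unfolding onL_def by auto
    next
      case 4 then show ?thesis using A[OF lR, of "snd p" "snd q"] pR abs_snd_le[of p q] unfolding onR_def by auto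
    qed
  qed
  define mn where "mn = min (u1 - u0) (t1 - t0)"
  have mnp: "mn > 0" using uv mn_def by simp
  define \<Lambda> where "\<Lambda> = 2 * K0 + 2 * M0 / mn"
  have K0L: "K0 \<le> \<Lambda>" unfolding \<Lambda>_def using K0 M0 mnp by (simp add: add_increasing2)
  have far: "GQ (\<phi> y) (\<phi> y') \<le> \<Lambda> * dist y y'" if "y \<in> rbd u0 u1 t0 t1" "y' \<in> rbd u0 u1 t0 t1" "mn \<le> dist y y'" for y y'
  proof -
    have "GQ (\<phi> y) (\<phi> y') \<le> GQ (\<phi> y) T0 + GQ T0 (\<phi> y')" by (rule GQ_triangle) (use szn[OF that(1)] szn[OF that(2)] sT0 in auto)
    also have "GQ T0 (\<phi> y') = GQ (\<phi> y') T0" by (rule GQ_sym) (use szn[OF that(2)] sT0 in auto)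
    finally have "GQ (\<phi> y) (\<phi> y') \<le> 2 * M0" using szn[OF that(1)] szn[OF that(2)] by linarith
    also have "\<dots> \<le> (2 * M0 / mn) * dist y y'"
    proof -
      have "2 * M0 = (2 * M0 / mn) * mn" using mnp by simp
      also have "\<dots> \<le> (2 * M0 / mn) * dist y y'" using that(3) M0 mnp by (intro mult_left_mono) auto
      finally show ?thesis .
    qed
    also have "\<dots> \<le> \<Lambda> * dist y y'" unfolding \<Lambda>_def using K0 by (simp add: distrib_right)
    finally show ?thesis .
  qed
  have corner: "GQ (\<phi> y) (\<phi> y') \<le> \<Lambda> * dist y y'"
    if "ss y c" "ss c y'" "dist y c \<le> dist y y'" "dist c y' \<le> dist y y'" "size (\<phi> y) = Q" "size (\<phi> c) = Q" "size (\<phi> y') = Q" for y y' c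
  proof -
    have "GQ (\<phi> y) (\<phi> y') \<le> GQ (\<phi> y) (\<phi> c) + GQ (\<phi> c) (\<phi> y')" by (rule GQ_triangle) (use that in auto)
    also have "\<dots> \<le> K0 * dist y c + K0 * dist c y'" using SS that(1,2) by (simp add: add_mono)
    also have "\<dots> \<le> K0 * dist y y' + K0 * dist y y'" using that(3,4) K0 by (intro add_mono mult_left_mono) auto
    also have "\<dots> = 2 * K0 * dist y y'" by simp
    also have "\<dots> \<le> \<Lambda> * dist y y'" unfolding \<Lambda>_def using M0 mnp by (intro mult_right_mono) auto
    finally show ?thesis .
  qed
  show "\<forall>y\<in>rbd u0 u1 t0 t1. \<forall>y'\<in>rbd u0 u1 t0 t1. GQ (\<phi> y) (\<phi> y') \<le> (2 * K0 + 2 * M0 / min (u1 - u0) (t1 - t0)) * dist y y'"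
  proof (intro ballI)
    fix y y' assume y: "y \<in> rbd u0 u1 t0 t1" and y': "y' \<in> rbd u0 u1 t0 t1"
    have sy: "size (\<phi> y) = Q" "size (\<phi> y') = Q" using szn y y' by auto
    have cBL: "size (\<phi> (u0, t0)) = Q" "size (\<phi> (u1, t0)) = Q" "size (\<phi> (u0, t1)) = Q" "size (\<phi> (u1, t1)) = Q"
      using szn uv unfolding rb onB_def onT_def by auto
    have d1: "\<bar>fst y - fst y'\<bar> \<le> dist y y'" "\<bar>snd y - snd y'\<bar> \<le> dist y y'" using abs_fst_le abs_snd_le by auto
    have "GQ (\<phi> y) (\<phi> y') \<le> \<Lambda> * dist y y'"
    proof (cases "ss y y'")
      case True then show ?thesis using SS[OF True] K0L by (meson dual_order.trans mult_right_mono zero_le_dist)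
    next
      case nss: False
      show ?thesis
      proof (cases "mn \<le> dist y y'")
        case True then show ?thesis using far y y' by blast
      next
        case False
        then have near1: "\<bar>fst y - fst y'\<bar> < mn" "\<bar>snd y - snd y'\<bar> < mn" using d1 by auto
        have mn1: "mn \<le> u1 - u0" "mn \<le> t1 - t0" unfolding mn_def by auto
        consider "onB y" | "onT y" | "onL y" | "onR y" using y[unfolded rb] by blast
        then show ?thesis
        proof cases
          case 1
          consider "onL y'" | "onR y'" using y'[unfolded rb] nss 1 near1 mn1 unfolding ss_def onB_def onT_def by auto
          then show ?thesis
          proof cases
            case c1: 1
            show ?thesis by (rule corner[of y "(u0, t0)"]) (use 1 c1 sy cBL uv d1 in \<open>auto simp: ss_def onB_def onL_def onR_def onT_def dist_same_snd dist_same_fst\<close>)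
          next
            case c2: 2
            show ?thesis by (rule corner[of y "(u1, t0)"]) (use 1 c2 sy cBL uv d1 in \<open>auto simp: ss_def onB_def onL_def onR_def onT_def dist_same_snd dist_same_fst\<close>)
          qed
        next
          case 2
          consider "onL y'" | "onR y'" using y'[unfolded rb] nss 2 near1 mn1 unfolding ss_def onB_def onT_def by auto
          then show ?thesis
          proof cases
            case c1: 1
            show ?thesis by (rule corner[of y "(u0, t1)"]) (use 2 c1 sy cBL uv d1 in \<open>auto simp: ss_def onB_def onL_def onR_def onT_def dist_same_snd dist_same_fst\<close>)
          next
            case c2: 2
            show ?thesis by (rule corner[of y "(u1, t1)"]) (use 2 c2 sy cBL uv d1 in \<open>auto simp: ss_def onB_def onL_def onR_def onT_def dist_same_snd dist_same_fst\<close>)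
          qed
        next
          case 3
          consider "onB y'" | "onT y'" using y'[unfolded rb] nss 3 near1 mn1 unfolding ss_def onL_def onR_def by auto
          then show ?thesis
          proof cases
            case c1: 1
            show ?thesis by (rule corner[of y "(u0, t0)"]) (use 3 c1 sy cBL uv d1 in \<open>auto simp: ss_def onB_def onL_def onR_def onT_def dist_same_snd dist_same_fst\<close>)
          next
            case c2: 2
            show ?thesis by (rule corner[of y "(u0, t1)"]) (use 3 c2 sy cBL uv d1 in \<open>auto simp: ss_def onB_def onL_def onR_def onT_def dist_same_snd dist_same_fst\<close>)
          qed
        next
          case 4
          consider "onB y'" | "onT y'" using y'[unfolded rb] nss 4 near1 mn1 unfolding ss_def onL_def onR_def by auto
          then show ?thesis
          proof cases
            case c1: 1
            show ?thesis by (rule corner[of y "(u1, t0)"]) (use 4 c1 sy cBL uv d1 in \<open>auto simp: ss_def onB_def onL_def onR_def onT_def dist_same_snd dist_same_fst\<close>)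
          next
            case c2: 2
            show ?thesis by (rule corner[of y "(u1, t1)"]) (use 4 c2 sy cBL uv d1 in \<open>auto simp: ss_def onB_def onL_def onR_def onT_def dist_same_snd dist_same_fst\<close>)
          qed
        qed
      qed
    qed
    then show "GQ (\<phi> y) (\<phi> y') \<le> (2 * K0 + 2 * M0 / min (u1 - u0) (t1 - t0)) * dist y y'"
      unfolding \<Lambda>_def mn_def .
  qed
qed




definition nrm :: "pt \<Rightarrow> real" where "nrm x = max \<bar>fst x\<bar> \<bar>snd x\<bar>"

locale LR =
  fixes a b :: real and Q :: nat and F G F' G' :: "pt \<Rightarrow> pt multiset" and Lf Lg de :: real
  assumes ab: "0 < a" "a < b"
  and szF: "\<And>x. nrm x = a \<Longrightarrow> size (F x) = Q" "\<And>x. nrm x = a \<Longrightarrow> size (F' x) = Q"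
  and szG: "\<And>x. nrm x = b \<Longrightarrow> size (G x) = Q" "\<And>x. nrm x = b \<Longrightarrow> size (G' x) = Q"
  and lipF: "\<And>x y. nrm x = a \<Longrightarrow> nrm y = a \<Longrightarrow> GQ (F x) (F y) \<le> Lf * dist x y"
            "\<And>x y. nrm x = a \<Longrightarrow> nrm y = a \<Longrightarrow> GQ (F' x) (F' y) \<le> Lf * dist x y"
  and lipG: "\<And>x y. nrm x = b \<Longrightarrow> nrm y = b \<Longrightarrow> GQ (G x) (G y) \<le> Lg * dist x y"
            "\<And>x y. nrm x = b \<Longrightarrow> nrm y = b \<Longrightarrow> GQ (G' x) (G' y) \<le> Lg * dist x y"
  and del: "\<And>x. nrm x = a \<Longrightarrow> GQ (F x) (G ((b / a) *\<^sub>R x)) \<le> de"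
           "\<And>x. nrm x = a \<Longrightarrow> GQ (F' x) (G' ((b / a) *\<^sub>R x)) \<le> de"
  and nonneg: "0 \<le> Lf" "0 \<le> Lg" "0 \<le> de"
  and compat: "G (-b, a) = G' (a, b)" "F (-a, a) = F' (a, a)"
begin

definition beta :: "real \<Rightarrow> pt multiset" where
  "beta u = (if u \<le> -a then interp (F' (a, a)) (G' (a, b)) ((- u - a) / (b - a)) else F (u, a))"

definition VV :: "real \<Rightarrow> real \<Rightarrow> pt multiset" where
  "VV u t = interp (beta u) (G (u, b)) ((t - a) / (b - a))"

definition V0 :: "real \<Rightarrow> pt multiset" where
  "V0 t = G (-b, t)"

definition K0 :: real where
  "K0 = Lf + 3 * Lg + de / (b - a)"

lemma wpos: "b - a > 0" using ab by simp

lemma K0_nonneg: "K0 \<ge> 0" unfolding K0_def using nonneg wpos by simp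

lemma nrm_a: "\<bar>u\<bar> \<le> a \<Longrightarrow> nrm (u, a) = a" unfolding nrm_def using ab by auto
lemma nrm_b: "\<bar>u\<bar> \<le> b \<Longrightarrow> nrm (u, b) = b" unfolding nrm_def using ab by auto
lemma nrm_b2: "\<bar>t\<bar> \<le> b \<Longrightarrow> nrm (-b, t) = b" unfolding nrm_def using ab by auto

lemma scale_ua: "(b / a) *\<^sub>R (u, a) = (b * u / a, b)" using ab by simp

lemma E0: "GQ (F' (a, a)) (G' (a, b)) \<le> de + Lg * (b - a)"
proof -
  have n1: "nrm (a, a) = a" using nrm_a ab by simp
  have s1: "(b / a) *\<^sub>R (a, a) = (b, b)" using ab by simp
  have nb: "nrm (b, b) = b" "nrm (a, b) = b" using nrm_b ab by auto
  have "GQ (F' (a, a)) (G' (a, b)) \<le> GQ (F' (a, a)) (G' (b, b)) + GQ (G' (b, b)) (G' (a, b))"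
    by (rule GQ_triangle) (use szF szG n1 nb in auto)
  also have "GQ (F' (a, a)) (G' (b, b)) \<le> de" using del(2)[OF n1] s1 by simp
  also have "GQ (G' (b, b)) (G' (a, b)) \<le> Lg * dist (b, b) (a, b)" by (rule lipG(2)[OF nb])
  also have "dist (b, b) (a, b) = b - a" using ab by (simp add: dist_Pair_Pair dist_real_def)
  finally show ?thesis by simp
qed

lemma szE: "size (G' (a, b)) = size (F' (a, a))"
  using szF(2)[of "(a, a)"] szG(2)[of "(a, b)"] nrm_a[of a] nrm_b[of a] ab by simp

lemma beta_size: "u \<in> {-b..a} \<Longrightarrow> size (beta u) = Q"
  unfolding beta_def using interp_props(1)[OF szE] szF(1)[OF nrm_a] szF(2)[OF nrm_a[of a]] ab
  by auto

lemma beta_F: "u \<in> {-a..a} \<Longrightarrow> beta u = F (u, a)"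
proof -
  assume u: "u \<in> {-a..a}"
  show ?thesis
  proof (cases "u = -a")
    case True
    then have "beta u = F' (a, a)" unfolding beta_def using interp_props(2)[OF szE] by simp
    then show ?thesis using compat(2) True by simp
  next
    case False then show ?thesis using u unfolding beta_def by auto
  qed
qed

lemma beta_mb: "beta (-b) = G (-b, a)"
proof -
  have "-b \<le> -a" using ab by simp
  moreover have "(- (- b) - a) / (b - a) = 1" using wpos by simp
  ultimately have "beta (-b) = G' (a, b)" unfolding beta_def using interp_props(3)[OF szE] by simp
  then show ?thesis using compat(1) by simp
qed

lemma beta_interp_lip:
  assumes "u \<in> {-b..-a}" "u' \<in> {-b..-a}"
  shows "GQ (beta u) (beta u') \<le> (Lg + de / (b - a)) * \<bar>u - u'\<bar>"
proof -
  have "GQ (beta u) (beta u') \<le> \<bar>(- u - a) / (b - a) - (- u' - a) / (b - a)\<bar> * GQ (F' (a, a)) (G' (a, b))"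
    unfolding beta_def using assms interp_props(4)[OF szE] by simp
  also have "\<bar>(- u - a) / (b - a) - (- u' - a) / (b - a)\<bar> = \<bar>u - u'\<bar> / (b - a)"
    using wpos by (simp add: diff_divide_distrib[symmetric] abs_minus_commute)
  also have "\<bar>u - u'\<bar> / (b - a) * GQ (F' (a, a)) (G' (a, b)) \<le> \<bar>u - u'\<bar> / (b - a) * (de + Lg * (b - a))"
    using E0 wpos by (intro mult_left_mono) auto
  also have "\<dots> = (Lg + de / (b - a)) * \<bar>u - u'\<bar>" using wpos by (simp add: field_simps)
  finally show ?thesis .
qed

lemma beta_F_lip:
  assumes "u \<in> {-a..a}" "u' \<in> {-a..a}"
  shows "GQ (beta u) (beta u') \<le> Lf * \<bar>u - u'\<bar>"
proof -
  have "GQ (beta u) (beta u') = GQ (F (u, a)) (F (u', a))" using beta_F assms by simp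
  also have "\<dots> \<le> Lf * dist (u, a) (u', a)" by (rule lipF(1)) (use nrm_a assms in auto)
  also have "dist (u, a) (u', a) = \<bar>u - u'\<bar>" by (simp add: dist_Pair_Pair dist_real_def)
  finally show ?thesis .
qed

definition Kb :: real where "Kb = Lf + Lg + de / (b - a)"

lemma Kb_nonneg: "Kb \<ge> 0" unfolding Kb_def using nonneg wpos by simp

lemma beta_lip:
  assumes "u \<in> {-b..a}" "u' \<in> {-b..a}"
  shows "GQ (beta u) (beta u') \<le> Kb * \<bar>u - u'\<bar>"
proof -
  have L1: "GQ (beta u) (beta u') \<le> Kb * \<bar>u - u'\<bar>" if "u \<in> {-b..-a}" "u' \<in> {-b..-a}" for u u'
  proof -
    have "GQ (beta u) (beta u') \<le> (Lg + de / (b - a)) * \<bar>u - u'\<bar>" by (rule beta_interp_lip[OF that])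
    also have "\<dots> \<le> Kb * \<bar>u - u'\<bar>" unfolding Kb_def using nonneg by (intro mult_right_mono) auto
    finally show ?thesis .
  qed
  have L2: "GQ (beta u) (beta u') \<le> Kb * \<bar>u - u'\<bar>" if "u \<in> {-a..a}" "u' \<in> {-a..a}" for u u'
  proof -
    have "GQ (beta u) (beta u') \<le> Lf * \<bar>u - u'\<bar>" by (rule beta_F_lip[OF that])
    also have "\<dots> \<le> Kb * \<bar>u - u'\<bar>" unfolding Kb_def using nonneg wpos by (intro mult_right_mono) auto
    finally show ?thesis .
  qed
  have sz: "size (beta v) = Q" if "v \<in> {-b..a}" for v using beta_size that by simp
  have L3: "GQ (beta u) (beta u') \<le> Kb * \<bar>u - u'\<bar>" if "u \<in> {-b..-a}" "u' \<in> {-a..a}" for u u'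
  proof -
    have m: "-a \<in> {-b..-a}" "-a \<in> {-a..a}" using ab by auto
    have "GQ (beta u) (beta u') \<le> GQ (beta u) (beta (-a)) + GQ (beta (-a)) (beta u')"
      by (rule GQ_triangle) (use sz that ab in auto)
    also have "\<dots> \<le> Kb * \<bar>u - (-a)\<bar> + Kb * \<bar>(-a) - u'\<bar>" using L1[OF that(1) m(1)] L2[OF m(2) that(2)] by simp
    also have "\<dots> = Kb * \<bar>u - u'\<bar>"
    proof -
      have "\<bar>u - (-a)\<bar> = -a - u" "\<bar>(-a) - u'\<bar> = u' + a" "\<bar>u - u'\<bar> = u' - u" using that by auto
      then show ?thesis by (simp add: algebra_simps)
    qed
    finally show ?thesis .
  qed
  consider "u \<in> {-b..-a}" "u' \<in> {-b..-a}" | "u \<in> {-a..a}" "u' \<in> {-a..a}" | "u \<in> {-b..-a}" "u' \<in> {-a..a}"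
    | "u' \<in> {-b..-a}" "u \<in> {-a..a}" using assms by fastforce
  then show ?thesis
  proof cases
    case 1 then show ?thesis by (rule L1)
  next
    case 2 then show ?thesis by (rule L2)
  next
    case 3 then show ?thesis by (rule L3)
  next
    case 4
    have "GQ (beta u) (beta u') = GQ (beta u') (beta u)" by (rule GQ_sym) (use sz assms in auto)
    also have "\<dots> \<le> Kb * \<bar>u' - u\<bar>" by (rule L3[OF 4])
    finally show ?thesis by (simp add: abs_minus_commute)
  qed
qed


lemma Kb_K0: "Kb \<le> K0" unfolding Kb_def K0_def using nonneg by simp
lemma Lg_K0: "Lg \<le> K0" unfolding K0_def using nonneg wpos by simp

lemma szGb: "u \<in> {-b..a} \<Longrightarrow> size (G (u, b)) = Q" using szG(1)[OF nrm_b[of u]] ab by auto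

lemma beta_G: "u \<in> {-b..a} \<Longrightarrow> GQ (beta u) (G (u, b)) \<le> de + 3 * Lg * (b - a)"
proof -
  assume u: "u \<in> {-b..a}"
  show ?thesis
  proof (cases "u \<le> -a")
    case False
    then have u': "u \<in> {-a..a}" using u by auto
    have n1: "nrm (u, a) = a" using nrm_a u' by auto
    have n2: "nrm (b * u / a, b) = b"
    proof (rule nrm_b)
      have "\<bar>b * u / a\<bar> = b * (\<bar>u\<bar> / a)" using ab by (simp add: abs_mult)
      also have "\<dots> \<le> b * 1" using u' ab by (intro mult_left_mono) auto
      finally show "\<bar>b * u / a\<bar> \<le> b" by simp
    qed
    have n3: "nrm (u, b) = b" using nrm_b u ab by auto
    have t1: "GQ (beta u) (G (u, b)) \<le> GQ (F (u, a)) (G (b * u / a, b)) + GQ (G (b * u / a, b)) (G (u, b))"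
      using beta_F[OF u'] by simp (rule GQ_triangle, use szF szG n1 n2 n3 in auto)
    have t2: "GQ (F (u, a)) (G (b * u / a, b)) \<le> de" using del(1)[OF n1] scale_ua by simp
    have t3: "GQ (G (b * u / a, b)) (G (u, b)) \<le> Lg * dist (b * u / a, b) (u, b)" by (rule lipG(1)[OF n2 n3])
    have t4: "dist (b * u / a, b) (u, b) \<le> b - a"
    proof -
      have "dist (b * u / a, b) (u, b) = \<bar>b * u / a - u\<bar>" by (simp add: dist_Pair_Pair dist_real_def)
      also have "b * u / a - u = (b - a) * (u / a)" using ab by (simp add: field_simps)
      also have "\<bar>(b - a) * (u / a)\<bar> = (b - a) * (\<bar>u\<bar> / a)" using ab by (simp add: abs_mult)
      also have "\<dots> \<le> (b - a) * 1" using u' ab by (intro mult_left_mono) auto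
      finally show ?thesis by simp
    qed
    have "Lg * dist (b * u / a, b) (u, b) \<le> Lg * (b - a)" using t4 nonneg by (intro mult_left_mono) auto
    moreover have "Lg * (b - a) \<le> 3 * Lg * (b - a)" using nonneg wpos by simp
    ultimately show ?thesis using t1 t2 t3 by linarith
  next
    case True
    define \<tau> where "\<tau> = (- u - a) / (b - a)"
    have tau: "0 \<le> \<tau>" "\<tau> \<le> 1" unfolding \<tau>_def using True u wpos by (auto simp: field_simps)
    have bu: "beta u = interp (F' (a, a)) (G' (a, b)) \<tau>" unfolding beta_def \<tau>_def using True by simp
    have n3: "nrm (u, b) = b" using nrm_b u ab by auto
    have n4: "nrm (-b, a) = b" using nrm_b2 ab by auto
    have t1: "GQ (beta u) (G (u, b)) \<le> GQ (beta u) (G' (a, b)) + GQ (G' (a, b)) (G (u, b))"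
      by (rule GQ_triangle) (use beta_size u szE szG n3 nrm_b[of a] ab in auto)
    have t2: "GQ (beta u) (G' (a, b)) \<le> \<bar>\<tau> - 1\<bar> * GQ (F' (a, a)) (G' (a, b))"
      unfolding bu using interp_props(4)[OF szE, of \<tau> 1] interp_props(3)[OF szE] by simp
    have t3: "\<bar>\<tau> - 1\<bar> * GQ (F' (a, a)) (G' (a, b)) \<le> 1 * (de + Lg * (b - a))" using tau E0 GQ_nonneg[OF szE] by (intro mult_mono) auto
    have t4: "GQ (G' (a, b)) (G (u, b)) \<le> Lg * dist (-b, a) (u, b)" unfolding compat(1)[symmetric] by (rule lipG(1)[OF n4 n3])
    have t5: "dist (-b, a) (u, b) \<le> 2 * (b - a)"
    proof -
      have "dist (-b, a) (u, b) \<le> \<bar>-b - u\<bar> + \<bar>a - b\<bar>" using dist_le_abs[of "(-b, a)" "(u, b)"] by simp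
      also have "\<dots> \<le> 2 * (b - a)" using True u ab by auto
      finally show ?thesis .
    qed
    have "Lg * dist (-b, a) (u, b) \<le> Lg * (2 * (b - a))" using t5 nonneg by (intro mult_left_mono) auto
    moreover have "Lg * (2 * (b - a)) + 1 * (de + Lg * (b - a)) = de + 3 * Lg * (b - a)" by (simp add: algebra_simps)
    ultimately show ?thesis using t1 t2 t3 t4 by linarith
  qed
qed

lemma szVV: "size (G (u, b)) = size (beta u)" if "u \<in> {-b..a}" for u
  using szGb[OF that] beta_size[OF that] by simp

lemma VV_props:
  assumes u: "u \<in> {-b..a}"
  shows "\<And>t. size (VV u t) = Q" "VV u a = beta u" "VV u b = G (u, b)"
    "\<And>t t'. GQ (VV u t) (VV u t') \<le> K0 * \<bar>t - t'\<bar>"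
    "\<And>t. t \<in> {a..b} \<Longrightarrow> GQ (VV u t) (beta u) \<le> K0 * (b - a)"
proof -
  note ip = interp_props[OF szVV[OF u]]
  show "size (VV u t) = Q" for t unfolding VV_def using ip(1) beta_size[OF u] by simp
  show "VV u a = beta u" unfolding VV_def using ip(2) by simp
  show "VV u b = G (u, b)" unfolding VV_def using ip(3) wpos by simp
  have D: "de + 3 * Lg * (b - a) = (b - a) * (de / (b - a) + 3 * Lg)" using wpos by (simp add: field_simps)
  have D2: "de / (b - a) + 3 * Lg \<le> K0" unfolding K0_def using nonneg by simp
  show "GQ (VV u t) (VV u t') \<le> K0 * \<bar>t - t'\<bar>" for t t'
  proof -
    have "GQ (VV u t) (VV u t') \<le> \<bar>(t - a) / (b - a) - (t' - a) / (b - a)\<bar> * GQ (beta u) (G (u, b))"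
      unfolding VV_def by (rule ip(4))
    also have "\<bar>(t - a) / (b - a) - (t' - a) / (b - a)\<bar> = \<bar>t - t'\<bar> / (b - a)"
      using wpos by (simp add: diff_divide_distrib[symmetric])
    also have "\<bar>t - t'\<bar> / (b - a) * GQ (beta u) (G (u, b)) \<le> \<bar>t - t'\<bar> / (b - a) * (de + 3 * Lg * (b - a))"
      using beta_G[OF u] wpos by (intro mult_left_mono) auto
    also have "\<dots> = \<bar>t - t'\<bar> * (de / (b - a) + 3 * Lg)" unfolding D using wpos by simp
    also have "\<dots> \<le> \<bar>t - t'\<bar> * K0" using D2 by (intro mult_left_mono) auto
    finally show ?thesis by (simp add: mult.commute)
  qed
  show "GQ (VV u t) (beta u) \<le> K0 * (b - a)" if t: "t \<in> {a..b}" for t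
  proof -
    have "GQ (VV u t) (beta u) \<le> \<bar>(t - a) / (b - a) - 0\<bar> * GQ (beta u) (G (u, b))"
      unfolding VV_def using ip(4)[of "(t - a) / (b - a)" 0] ip(2) by simp
    also have "\<dots> \<le> 1 * (de + 3 * Lg * (b - a))" using t wpos beta_G[OF u] GQ_nonneg[OF szVV[OF u]] by (intro mult_mono) (auto simp: field_simps)
    also have "\<dots> \<le> K0 * (b - a)" unfolding D using D2 wpos by (simp add: mult.commute mult_right_mono)
    finally show ?thesis .
  qed
qed

lemma V0_props:
  shows "\<And>t. t \<in> {a..b} \<Longrightarrow> size (V0 t) = Q" "V0 a = beta (-b)" "V0 b = G (-b, b)"
    "\<And>t t'. t \<in> {a..b} \<Longrightarrow> t' \<in> {a..b} \<Longrightarrow> GQ (V0 t) (V0 t') \<le> K0 * \<bar>t - t'\<bar>"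
    "\<And>t. t \<in> {a..b} \<Longrightarrow> GQ (V0 t) (beta (-b)) \<le> K0 * (b - a)"
proof -
  have n: "nrm (-b, t) = b" if "t \<in> {a..b}" for t using nrm_b2 that ab by auto
  show "size (V0 t) = Q" if "t \<in> {a..b}" for t unfolding V0_def using szG(1)[OF n[OF that]] .
  show "V0 a = beta (-b)" unfolding V0_def beta_mb ..
  show "V0 b = G (-b, b)" unfolding V0_def ..
  show "GQ (V0 t) (V0 t') \<le> K0 * \<bar>t - t'\<bar>" if "t \<in> {a..b}" "t' \<in> {a..b}" for t t'
  proof -
    have "GQ (V0 t) (V0 t') \<le> Lg * dist (-b, t) (-b, t')" unfolding V0_def by (rule lipG(1)[OF n[OF that(1)] n[OF that(2)]])
    also have "\<dots> = Lg * \<bar>t - t'\<bar>" by (simp add: dist_Pair_Pair dist_real_def)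
    also have "\<dots> \<le> K0 * \<bar>t - t'\<bar>" using Lg_K0 by (intro mult_right_mono) auto
    finally show ?thesis .
  qed
  show "GQ (V0 t) (beta (-b)) \<le> K0 * (b - a)" if "t \<in> {a..b}" for t
  proof -
    have a1: "a \<in> {a..b}" using ab by simp
    have "GQ (V0 t) (beta (-b)) = GQ (V0 t) (V0 a)" unfolding V0_def beta_mb ..
    also have "\<dots> \<le> Lg * dist (-b, t) (-b, a)" unfolding V0_def by (rule lipG(1)[OF n[OF that] n[OF a1]])
    also have "\<dots> = Lg * \<bar>t - a\<bar>" by (simp add: dist_Pair_Pair dist_real_def)
    also have "\<dots> \<le> K0 * (b - a)" using Lg_K0 that nonneg by (intro mult_mono) auto
    finally show ?thesis .
  qed
qed

lemma Gtop_lip: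
  assumes "u \<in> {-b..a}" "u' \<in> {-b..a}"
  shows "GQ (G (u, b)) (G (u', b)) \<le> K0 * \<bar>u - u'\<bar>"
proof -
  have "GQ (G (u, b)) (G (u', b)) \<le> Lg * dist (u, b) (u', b)" by (rule lipG(1)) (use nrm_b assms ab in auto)
  also have "\<dots> = Lg * \<bar>u - u'\<bar>" by (simp add: dist_Pair_Pair dist_real_def)
  also have "\<dots> \<le> K0 * \<bar>u - u'\<bar>" using Lg_K0 by (intro mult_right_mono) auto
  finally show ?thesis .
qed


definition cphi :: "real \<Rightarrow> (real \<Rightarrow> pt multiset) \<Rightarrow> (real \<Rightarrow> pt multiset) \<Rightarrow> pt \<Rightarrow> pt multiset" where
  "cphi u0 VL VR = (\<lambda>y. if snd y = a then beta (fst y) else if snd y = b then G (fst y, b)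
                       else if fst y = u0 then VL (snd y) else VR (snd y))"

lemma cell:
  assumes u: "-b \<le> u0" "u0 < u1" "u1 \<le> a" "u1 - u0 \<le> b - a" "b - a \<le> 2 * (u1 - u0)"
    and VL: "\<forall>t\<in>{a..b}. size (VL t) = Q" "VL a = beta u0" "VL b = G (u0, b)"
      "\<forall>t\<in>{a..b}. \<forall>t'\<in>{a..b}. GQ (VL t) (VL t') \<le> K0 * \<bar>t - t'\<bar>" "\<forall>t\<in>{a..b}. GQ (VL t) (beta u0) \<le> K0 * (b - a)"
    and VR: "\<forall>t\<in>{a..b}. size (VR t) = Q" "VR a = beta u1" "VR b = G (u1, b)"
      "\<forall>t\<in>{a..b}. \<forall>t'\<in>{a..b}. GQ (VR t) (VR t') \<le> K0 * \<bar>t - t'\<bar>" "\<forall>t\<in>{a..b}. GQ (VR t) (beta u1) \<le> K0 * (b - a)"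
  shows "\<exists>\<Phi>. (\<forall>x\<in>rect u0 u1 a b. size (\<Phi> x) = Q) \<and> (\<forall>y\<in>rbd u0 u1 a b. \<Phi> y = cphi u0 VL VR y) \<and>
     (\<forall>x\<in>rect u0 u1 a b. \<forall>x'\<in>rect u0 u1 a b. GQ (\<Phi> x) (\<Phi> x') \<le> 10 * CQ Q * K0 * dist x x')"
proof -
  define M0 where "M0 = 2 * K0 * (b - a)"
  have K0n: "K0 \<ge> 0" by (rule K0_nonneg)
  have M0n: "M0 \<ge> 0" unfolding M0_def using K0n wpos by simp
  have Kw: "0 \<le> K0 * (b - a)" using K0n wpos by simp
  have sub: "{u0..u1} \<subseteq> {-b..a}" using u by auto
  have w1: "K0 * \<bar>v - v'\<bar> \<le> K0 * (b - a)" if "v \<in> {u0..u1}" "v' \<in> {u0..u1}" for v v'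
    using that u K0n by (intro mult_left_mono) auto
  have bl: "GQ (beta v) (beta v') \<le> K0 * \<bar>v - v'\<bar>" if "v \<in> {u0..u1}" "v' \<in> {u0..u1}" for v v'
  proof -
    have "GQ (beta v) (beta v') \<le> Kb * \<bar>v - v'\<bar>" using beta_lip that sub by auto
    also have "\<dots> \<le> K0 * \<bar>v - v'\<bar>" using Kb_K0 by (intro mult_right_mono) auto
    finally show ?thesis .
  qed
  have szb: "size (beta v) = Q" if "v \<in> {u0..u1}" for v using beta_size that sub by auto
  have szg: "size (G (v, b)) = Q" if "v \<in> {u0..u1}" for v using szGb that sub by auto
  have u0i: "u0 \<in> {u0..u1}" "u1 \<in> {u0..u1}" using u by auto
  have bt: "b \<in> {a..b}" "a \<in> {a..b}" using ab by auto
  note RL = rbd_lip[of u0 u1 a b K0 M0 beta VL VR "\<lambda>u. G (u, b)" Q "beta u0" "cphi u0 VL VR"]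
  have hyps: "\<forall>u\<in>{u0..u1}. \<forall>u'\<in>{u0..u1}. GQ (beta u) (beta u') \<le> K0 * \<bar>u - u'\<bar>"
    "\<forall>u\<in>{u0..u1}. \<forall>u'\<in>{u0..u1}. GQ (G (u, b)) (G (u', b)) \<le> K0 * \<bar>u - u'\<bar>"
    using bl Gtop_lip sub by auto
  have sB: "\<forall>u\<in>{u0..u1}. size (beta u) = Q \<and> GQ (beta u) (beta u0) \<le> M0"
  proof
    fix v assume v: "v \<in> {u0..u1}"
    have "GQ (beta v) (beta u0) \<le> K0 * (b - a)" using bl[OF v u0i(1)] w1[OF v u0i(1)] by linarith
    then show "size (beta v) = Q \<and> GQ (beta v) (beta u0) \<le> M0" using szb[OF v] Kw unfolding M0_def by simp
  qed
  have sT: "\<forall>u\<in>{u0..u1}. size (G (u, b)) = Q \<and> GQ (G (u, b)) (beta u0) \<le> M0"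
  proof
    fix v assume v: "v \<in> {u0..u1}"
    have "GQ (G (v, b)) (beta u0) \<le> GQ (G (v, b)) (G (u0, b)) + GQ (G (u0, b)) (beta u0)"
      by (rule GQ_triangle) (use szg szb v u0i in auto)
    moreover have "GQ (G (v, b)) (G (u0, b)) \<le> K0 * (b - a)" using hyps(2) v u0i w1[OF v u0i(1)] by fastforce
    moreover have "GQ (G (u0, b)) (beta u0) \<le> K0 * (b - a)" using VL(3,5) bt by metis
    ultimately show "size (G (v, b)) = Q \<and> GQ (G (v, b)) (beta u0) \<le> M0" using szg[OF v] M0_def by simp
  qed
  have sL: "\<forall>t\<in>{a..b}. size (VL t) = Q \<and> GQ (VL t) (beta u0) \<le> M0"
    using VL(1,5) Kw unfolding M0_def by fastforce
  have sR: "\<forall>t\<in>{a..b}. size (VR t) = Q \<and> GQ (VR t) (beta u0) \<le> M0"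
  proof
    fix t assume t: "t \<in> {a..b}"
    have "GQ (VR t) (beta u0) \<le> GQ (VR t) (beta u1) + GQ (beta u1) (beta u0)"
      by (rule GQ_triangle) (use VR(1) szb t u0i in auto)
    moreover have "GQ (beta u1) (beta u0) \<le> K0 * (b - a)" using bl[OF u0i(2) u0i(1)] w1[OF u0i(2) u0i(1)] by linarith
    moreover have "GQ (VR t) (beta u1) \<le> K0 * (b - a)" using VR(5) t by blast
    ultimately show "size (VR t) = Q \<and> GQ (VR t) (beta u0) \<le> M0" using VR(1) t unfolding M0_def by auto
  qed
  have phi: "cphi u0 VL VR = (\<lambda>y. if snd y = a then beta (fst y) else if snd y = b then G (fst y, b)
                       else if fst y = u0 then VL (snd y) else VR (snd y))" unfolding cphi_def ..
  have R: "\<forall>y\<in>rbd u0 u1 a b. size (cphi u0 VL VR y) = Q \<and> GQ (cphi u0 VL VR y) (beta u0) \<le> M0"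
     "\<forall>y\<in>rbd u0 u1 a b. \<forall>y'\<in>rbd u0 u1 a b. GQ (cphi u0 VL VR y) (cphi u0 VL VR y') \<le> (2 * K0 + 2 * M0 / min (u1 - u0) (b - a)) * dist y y'"
    using RL[OF u(2) ab(2) K0n M0n VL(2)[symmetric] VR(2)[symmetric] VL(3)[symmetric] VR(3)[symmetric] hyps(1) hyps(2) VL(4) VR(4) sB sT sL sR szb[OF u0i(1)] phi]
    by blast+
  define \<Lambda> where "\<Lambda> = 2 * K0 + 2 * M0 / min (u1 - u0) (b - a)"
  have mn: "min (u1 - u0) (b - a) = u1 - u0" using u by simp
  have \<Lambda>b: "\<Lambda> \<le> 10 * K0"
  proof -
    have "2 * M0 / (u1 - u0) \<le> 8 * K0"
    proof -
      have "2 * M0 = 4 * K0 * (b - a)" unfolding M0_def by simp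
      also have "\<dots> \<le> 4 * K0 * (2 * (u1 - u0))" using u K0n by (intro mult_left_mono) auto
      finally show ?thesis using u by (simp add: divide_le_eq algebra_simps)
    qed
    then show ?thesis unfolding \<Lambda>_def mn by simp
  qed
  have \<Lambda>n: "\<Lambda> \<ge> 0" unfolding \<Lambda>_def using K0n M0n u by simp
  obtain \<Phi> where P: "\<forall>x\<in>rect u0 u1 a b. size (\<Phi> x) = Q" "\<forall>y\<in>rbd u0 u1 a b. \<Phi> y = cphi u0 VL VR y"
    "\<forall>x\<in>rect u0 u1 a b. \<forall>x'\<in>rect u0 u1 a b. GQ (\<Phi> x) (\<Phi> x') \<le> CQ Q * \<Lambda> * dist x x'"
    using cone[OF u(2) ab(2) _ _ \<Lambda>n, where \<phi>="cphi u0 VL VR" and Q=Q] R u unfolding \<Lambda>_def by auto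
  show ?thesis
  proof (intro exI[of _ \<Phi>] conjI)
    show "\<forall>x\<in>rect u0 u1 a b. size (\<Phi> x) = Q" by (rule P(1))
    show "\<forall>y\<in>rbd u0 u1 a b. \<Phi> y = cphi u0 VL VR y" by (rule P(2))
    show "\<forall>x\<in>rect u0 u1 a b. \<forall>x'\<in>rect u0 u1 a b. GQ (\<Phi> x) (\<Phi> x') \<le> 10 * CQ Q * K0 * dist x x'"
    proof (intro ballI)
      fix x x' assume "x \<in> rect u0 u1 a b" "x' \<in> rect u0 u1 a b"
      then have "GQ (\<Phi> x) (\<Phi> x') \<le> CQ Q * \<Lambda> * dist x x'" using P(3) by blast
      also have "\<dots> \<le> CQ Q * (10 * K0) * dist x x'" using \<Lambda>b CQ_pos[of Q] by (intro mult_right_mono mult_left_mono) auto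
      finally show "GQ (\<Phi> x) (\<Phi> x') \<le> 10 * CQ Q * K0 * dist x x'" by simp
    qed
  qed
qed


definition NN :: nat where "NN = nat \<lceil>(a + b) / (b - a)\<rceil>"
definition ll :: real where "ll = (a + b) / real NN"
definition cc :: "nat \<Rightarrow> real" where "cc k = -b + real k * ll"
definition VLk :: "nat \<Rightarrow> real \<Rightarrow> pt multiset" where "VLk k = (if k = 0 then V0 else VV (cc k))"
definition VRk :: "nat \<Rightarrow> real \<Rightarrow> pt multiset" where "VRk k = VV (cc (Suc k))"

lemma NN_facts: "NN \<ge> 1" "ll \<le> b - a" "b - a \<le> 2 * ll" "ll > 0"
proof -
  define q where "q = (a + b) / (b - a)"
  have q1: "q > 1" unfolding q_def using ab wpos by (simp add: field_simps)
  have c1: "q \<le> real_of_int \<lceil>q\<rceil>" by (rule le_of_int_ceiling)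
  have c2: "real_of_int \<lceil>q\<rceil> < q + 1" using ceiling_correct[of q] by linarith
  have NR: "real NN = real_of_int \<lceil>q\<rceil>" unfolding NN_def q_def[symmetric] using c1 q1 by simp
  have "real NN \<ge> 1" using NR c1 q1 by simp
  then show "NN \<ge> 1" by simp
  have Np: "real NN > 0" using NR c1 q1 by simp
  show "ll > 0" unfolding ll_def using Np ab by simp
  have "a + b = q * (b - a)" unfolding q_def using wpos by simp
  then have ab': "a + b = q * (b - a)" .
  show "ll \<le> b - a" unfolding ll_def ab' using Np NR c1 wpos by (simp add: divide_le_eq mult_right_mono)
  have "real NN \<le> 2 * q" using NR c2 q1 by simp
  then have "real NN * (b - a) \<le> 2 * (q * (b - a))" using wpos by (simp add: mult_right_mono)
  then show "b - a \<le> 2 * ll" unfolding ll_def ab'[symmetric] using Np by (simp add: field_simps)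
qed

lemma cc_facts: "cc 0 = -b" "cc NN = a" "cc (Suc k) = cc k + ll" "k \<le> NN \<Longrightarrow> cc k \<in> {-b..a}"
  "i < j \<Longrightarrow> cc i < cc j" "i \<le> j \<Longrightarrow> cc i \<le> cc j"
proof -
  have Np: "real NN > 0" using NN_facts(1) by simp
  show "cc 0 = -b" unfolding cc_def by simp
  show "cc NN = a" unfolding cc_def ll_def using Np by simp
  show "cc (Suc k) = cc k + ll" unfolding cc_def by (simp add: algebra_simps)
  show "i < j \<Longrightarrow> cc i < cc j" unfolding cc_def using NN_facts(4) by simp
  show "i \<le> j \<Longrightarrow> cc i \<le> cc j" unfolding cc_def using NN_facts(4) by (simp add: mult_right_mono)
  assume k: "k \<le> NN"
  have "real k * ll \<le> real NN * ll" using k NN_facts(4) by (simp add: mult_right_mono)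
  then have "cc k \<le> a" using \<open>cc NN = a\<close> unfolding cc_def by simp
  moreover have "cc k \<ge> -b" unfolding cc_def using NN_facts(4) by simp
  ultimately show "cc k \<in> {-b..a}" by simp
qed

lemma cells_exist:
  "\<exists>\<Phi>s. \<forall>k<NN. (\<forall>x\<in>rect (cc k) (cc (Suc k)) a b. size (\<Phi>s k x) = Q) \<and>
      (\<forall>y\<in>rbd (cc k) (cc (Suc k)) a b. \<Phi>s k y = cphi (cc k) (VLk k) (VRk k) y) \<and>
      (\<forall>x\<in>rect (cc k) (cc (Suc k)) a b. \<forall>x'\<in>rect (cc k) (cc (Suc k)) a b. GQ (\<Phi>s k x) (\<Phi>s k x') \<le> 10 * CQ Q * K0 * dist x x')"
proof -
  have "\<exists>\<Phi>. (\<forall>x\<in>rect (cc k) (cc (Suc k)) a b. size (\<Phi> x) = Q) \<and>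
      (\<forall>y\<in>rbd (cc k) (cc (Suc k)) a b. \<Phi> y = cphi (cc k) (VLk k) (VRk k) y) \<and>
      (\<forall>x\<in>rect (cc k) (cc (Suc k)) a b. \<forall>x'\<in>rect (cc k) (cc (Suc k)) a b. GQ (\<Phi> x) (\<Phi> x') \<le> 10 * CQ Q * K0 * dist x x')"
    if k: "k < NN" for k
  proof (rule cell)
    show "-b \<le> cc k" using cc_facts(4)[of k] k by simp
    show "cc k < cc (Suc k)" using cc_facts(5) by simp
    show "cc (Suc k) \<le> a" using cc_facts(4)[of "Suc k"] k by simp
    show "cc (Suc k) - cc k \<le> b - a" using cc_facts(3) NN_facts(2) by simp
    show "b - a \<le> 2 * (cc (Suc k) - cc k)" using cc_facts(3) NN_facts(3) by simp
    have ckin: "cc k \<in> {-b..a}" "cc (Suc k) \<in> {-b..a}" using cc_facts(4) k by auto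
    note VR = VV_props[OF ckin(2)]
    show "\<forall>t\<in>{a..b}. size (VRk k t) = Q" "VRk k a = beta (cc (Suc k))" "VRk k b = G (cc (Suc k), b)"
      "\<forall>t\<in>{a..b}. \<forall>t'\<in>{a..b}. GQ (VRk k t) (VRk k t') \<le> K0 * \<bar>t - t'\<bar>"
      "\<forall>t\<in>{a..b}. GQ (VRk k t) (beta (cc (Suc k))) \<le> K0 * (b - a)"
      unfolding VRk_def using VR by auto
    show "\<forall>t\<in>{a..b}. size (VLk k t) = Q" "VLk k a = beta (cc k)" "VLk k b = G (cc k, b)"
      "\<forall>t\<in>{a..b}. \<forall>t'\<in>{a..b}. GQ (VLk k t) (VLk k t') \<le> K0 * \<bar>t - t'\<bar>"
      "\<forall>t\<in>{a..b}. GQ (VLk k t) (beta (cc k)) \<le> K0 * (b - a)"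
    proof -
      show "\<forall>t\<in>{a..b}. size (VLk k t) = Q" unfolding VLk_def using V0_props(1) VV_props(1)[OF ckin(1)] by auto
      show "VLk k a = beta (cc k)" unfolding VLk_def using V0_props(2) VV_props(2)[OF ckin(1)] cc_facts(1) by auto
      show "VLk k b = G (cc k, b)" unfolding VLk_def using V0_props(3) VV_props(3)[OF ckin(1)] cc_facts(1) by auto
      show "\<forall>t\<in>{a..b}. \<forall>t'\<in>{a..b}. GQ (VLk k t) (VLk k t') \<le> K0 * \<bar>t - t'\<bar>"
        unfolding VLk_def using V0_props(4) VV_props(4)[OF ckin(1)] by auto
      show "\<forall>t\<in>{a..b}. GQ (VLk k t) (beta (cc k)) \<le> K0 * (b - a)"
        unfolding VLk_def using V0_props(5) VV_props(5)[OF ckin(1)] cc_facts(1) by auto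
    qed
  qed
  then show ?thesis by metis
qed


definition cellidx :: "real \<Rightarrow> nat" where
  "cellidx u = min (NN - 1) (nat \<lfloor>(u + b) / ll\<rfloor>)"

lemma cellidx:
  assumes u: "u \<in> {-b..a}"
  shows "cellidx u < NN" "cc (cellidx u) \<le> u" "u \<le> cc (Suc (cellidx u))"
proof -
  define v where "v = (u + b) / ll"
  have llp: "ll > 0" by (rule NN_facts(4))
  have N1: "NN \<ge> 1" by (rule NN_facts(1))
  have v0: "v \<ge> 0" unfolding v_def using u llp by simp
  have NL: "real NN * ll = a + b" unfolding ll_def using N1 by simp
  have vN: "v \<le> real NN" unfolding v_def using u llp NL by (simp add: divide_le_eq)
  have uv: "u = -b + v * ll" unfolding v_def using llp by simp
  define f where "f = nat \<lfloor>v\<rfloor>"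
  have f1: "real f \<le> v" "v < real f + 1" unfolding f_def using v0 by linarith+
  show "cellidx u < NN" unfolding cellidx_def using N1 by simp
  have "cc (cellidx u) \<le> u \<and> u \<le> cc (Suc (cellidx u))"
  proof (cases "f \<le> NN - 1")
    case True
    then have ci: "cellidx u = f" unfolding cellidx_def f_def v_def by simp
    have "cc f \<le> u" unfolding cc_def uv using f1 llp by (simp add: mult_right_mono)
    moreover have "u \<le> cc (Suc f)" unfolding cc_def uv using f1 llp by (simp add: mult_right_mono)
    ultimately show ?thesis using ci by simp
  next
    case False
    then have "real f \<ge> real NN" using N1 by simp
    then have "v = real NN" using f1 vN by simp
    then have ua: "u = a" using uv NL by simp
    have ci: "cellidx u = NN - 1" unfolding cellidx_def using False f_def v_def by simp
    have "Suc (NN - 1) = NN" using N1 by simp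
    then show ?thesis using ci ua cc_facts(2) cc_facts(6)[of "NN - 1" NN] by simp
  qed
  then show "cc (cellidx u) \<le> u" "u \<le> cc (Suc (cellidx u))" by auto
qed

lemma shared:
  assumes "fst x = cc (Suc j)"
  shows "cphi (cc j) (VLk j) (VRk j) x = cphi (cc (Suc j)) (VLk (Suc j)) (VRk (Suc j)) x"
proof -
  have "cc (Suc j) \<noteq> cc j" using cc_facts(5)[of j "Suc j"] by simp
  then show ?thesis unfolding cphi_def VLk_def VRk_def using assms by simp
qed

lemma LR_main:
  "\<exists>H. (\<forall>x\<in>rect (-b) a a b. size (H x) = Q) \<and>
   (\<forall>x\<in>rect (-b) a a b. \<forall>x'\<in>rect (-b) a a b. GQ (H x) (H x') \<le> 10 * CQ Q * K0 * dist x x') \<and>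
   (\<forall>u\<in>{-b..a}. H (u, a) = beta u) \<and> (\<forall>u\<in>{-b..a}. H (u, b) = G (u, b)) \<and>
   (\<forall>t\<in>{a..b}. H (-b, t) = G (-b, t)) \<and> (\<forall>t\<in>{a..b}. H (a, t) = VV a t)"
proof -
  obtain \<Phi>s where P: "\<And>k. k < NN \<Longrightarrow> (\<forall>x\<in>rect (cc k) (cc (Suc k)) a b. size (\<Phi>s k x) = Q) \<and>
      (\<forall>y\<in>rbd (cc k) (cc (Suc k)) a b. \<Phi>s k y = cphi (cc k) (VLk k) (VRk k) y) \<and>
      (\<forall>x\<in>rect (cc k) (cc (Suc k)) a b. \<forall>x'\<in>rect (cc k) (cc (Suc k)) a b. GQ (\<Phi>s k x) (\<Phi>s k x') \<le> 10 * CQ Q * K0 * dist x x')"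
    using cells_exist by blast
  define H where "H = (\<lambda>x. \<Phi>s (cellidx (fst x)) x)"
  define S where "S = rect (-b) a a b"
  have inS: "fst x \<in> {-b..a}" "snd x \<in> {a..b}" if "x \<in> S" for x using that unfolding S_def rect_def by auto
  have own: "x \<in> rect (cc (cellidx (fst x))) (cc (Suc (cellidx (fst x)))) a b" if "x \<in> S" for x
    using cellidx[OF inS(1)[OF that]] inS(2)[OF that] unfolding rect_def by (cases x) auto
  have Hk: "H x = \<Phi>s k x" if k: "k < NN" and x: "x \<in> rect (cc k) (cc (Suc k)) a b" for k x
  proof -
    define j where "j = cellidx (fst x)"
    have xS: "x \<in> S" using x cc_facts(4)[of k] cc_facts(4)[of "Suc k"] k unfolding S_def rect_def by auto
    have j: "j < NN" "x \<in> rect (cc j) (cc (Suc j)) a b" using cellidx(1) inS(1)[OF xS] own[OF xS] j_def by auto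
    have xk: "cc k \<le> fst x" "fst x \<le> cc (Suc k)" "a \<le> snd x" "snd x \<le> b" using x unfolding rect_def by auto
    have xj: "cc j \<le> fst x" "fst x \<le> cc (Suc j)" using j(2) unfolding rect_def by auto
    have rb: "x \<in> rbd (cc i) (cc (Suc i)) a b" if "x \<in> rect (cc i) (cc (Suc i)) a b" "fst x = cc i \<or> fst x = cc (Suc i)" for i
      using that unfolding rbd_def by auto
    have "\<Phi>s j x = \<Phi>s k x"
    proof (cases j k rule: linorder_cases)
      case less
      then have "Suc j \<le> k" by simp
      then have "cc (Suc j) \<le> cc k" using cc_facts(6) by blast
      then have e: "fst x = cc (Suc j)" "fst x = cc k" using xk xj by linarith+
      have "Suc j = k"
      proof (rule ccontr)
        assume "Suc j \<noteq> k" then have "cc (Suc j) < cc k" using \<open>Suc j \<le> k\<close> cc_facts(5) by simp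
        then show False using e by simp
      qed
      then show ?thesis using P[OF j(1)] P[OF k] rb[OF j(2)] rb[OF x] e shared[OF e(1)] by auto
    next
      case equal then show ?thesis by simp
    next
      case greater
      then have "Suc k \<le> j" by simp
      then have "cc (Suc k) \<le> cc j" using cc_facts(6) by blast
      then have e: "fst x = cc (Suc k)" "fst x = cc j" using xk xj by linarith+
      have "Suc k = j"
      proof (rule ccontr)
        assume "Suc k \<noteq> j" then have "cc (Suc k) < cc j" using \<open>Suc k \<le> j\<close> cc_facts(5) by simp
        then show False using e by simp
      qed
      then show ?thesis using P[OF j(1)] P[OF k] rb[OF j(2)] rb[OF x] e shared[OF e(1)] by auto
    qed
    then show ?thesis unfolding H_def j_def by simp
  qed
  have szH: "size (H x) = Q" if "x \<in> S" for x
    using P[OF cellidx(1)[OF inS(1)[OF that]]] own[OF that] unfolding H_def by blast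
  have lip: "GQ (H x) (H x') \<le> 10 * CQ Q * K0 * dist x x'" if "x \<in> S" "x' \<in> S" for x x'
  proof (rule plane_glue[where F="(\<lambda>k. rect (cc k) (cc (Suc k)) a b) ` {..<NN}" and S=S and Q=Q])
    show "convex S" unfolding S_def rect_def by (intro convex_Times) auto
    show "finite ((\<lambda>k. rect (cc k) (cc (Suc k)) a b) ` {..<NN})" by simp
    show "\<forall>P\<in>(\<lambda>k. rect (cc k) (cc (Suc k)) a b) ` {..<NN}. closed P" unfolding rect_def by (auto intro: closed_Times)
    show "S \<subseteq> \<Union> ((\<lambda>k. rect (cc k) (cc (Suc k)) a b) ` {..<NN})"
      using own cellidx(1) inS by blast
    show "0 \<le> 10 * CQ Q * K0" using CQ_pos[of Q] K0_nonneg by simp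
    show "\<forall>P\<in>(\<lambda>k. rect (cc k) (cc (Suc k)) a b) ` {..<NN}. \<forall>x\<in>P \<inter> S. \<forall>y\<in>P \<inter> S. GQ (H x) (H y) \<le> 10 * CQ Q * K0 * dist x y"
    proof (intro ballI)
      fix P x y assume Pm: "P \<in> (\<lambda>k. rect (cc k) (cc (Suc k)) a b) ` {..<NN}" and x: "x \<in> P \<inter> S" and y: "y \<in> P \<inter> S"
      then obtain k where k: "k < NN" "P = rect (cc k) (cc (Suc k)) a b" by auto
      then show "GQ (H x) (H y) \<le> 10 * CQ Q * K0 * dist x y" using Hk[OF k(1)] P[OF k(1)] x y by auto
    qed
    show "\<forall>x\<in>S. size (H x) = Q" using szH by blast
  qed (use that in auto)
  have bot: "H (u, a) = beta u" if "u \<in> {-b..a}" for u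
  proof -
    have xS: "(u, a) \<in> S" using that ab unfolding S_def rect_def by auto
    define j where "j = cellidx u"
    have j: "j < NN" "(u, a) \<in> rbd (cc j) (cc (Suc j)) a b" using cellidx(1)[OF that] own[OF xS] j_def unfolding rbd_def by auto
    show ?thesis using P[OF j(1)] j(2) unfolding H_def j_def cphi_def by simp
  qed
  have top: "H (u, b) = G (u, b)" if "u \<in> {-b..a}" for u
  proof -
    have xS: "(u, b) \<in> S" using that ab unfolding S_def rect_def by auto
    define j where "j = cellidx u"
    have j: "j < NN" "(u, b) \<in> rbd (cc j) (cc (Suc j)) a b" using cellidx(1)[OF that] own[OF xS] j_def unfolding rbd_def by auto
    show ?thesis using P[OF j(1)] j(2) ab unfolding H_def j_def cphi_def by simp
  qed
  have N0: "0 < NN" using NN_facts(1) by simp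
  have lft: "H (-b, t) = G (-b, t)" if "t \<in> {a..b}" for t
  proof -
    have r: "(-b, t) \<in> rbd (cc 0) (cc (Suc 0)) a b" using that cc_facts(1) cc_facts(5)[of 0 "Suc 0"] unfolding rbd_def rect_def by auto
    then have "H (-b, t) = \<Phi>s 0 (-b, t)" using Hk[OF N0] unfolding rbd_def by blast
    also have "\<dots> = cphi (cc 0) (VLk 0) (VRk 0) (-b, t)" using P[OF N0] r by blast
    also have "\<dots> = G (-b, t)" unfolding cphi_def VLk_def V0_def using cc_facts(1) beta_mb by auto
    finally show ?thesis .
  qed
  have rgt: "H (a, t) = VV a t" if "t \<in> {a..b}" for t
  proof -
    define k where "k = NN - 1"
    have k: "k < NN" "Suc k = NN" using N0 k_def by auto
    have r: "(a, t) \<in> rbd (cc k) (cc (Suc k)) a b" using that k cc_facts(2) cc_facts(6)[of k NN] unfolding rbd_def rect_def by auto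
    then have "H (a, t) = \<Phi>s k (a, t)" using Hk[OF k(1)] unfolding rbd_def by blast
    also have "\<dots> = cphi (cc k) (VLk k) (VRk k) (a, t)" using P[OF k(1)] r by blast
    also have "\<dots> = VV a t"
    proof -
      have ne: "a \<noteq> cc k" using cc_facts(5)[of k NN] k cc_facts(2) by simp
      have ain: "a \<in> {-b..a}" using ab by simp
      show ?thesis unfolding cphi_def VRk_def using ne k cc_facts(2) VV_props(2,3)[OF ain] by auto
    qed
    finally show ?thesis .
  qed
  show ?thesis
    by (rule exI[of _ H]) (use szH lip bot top lft rgt in \<open>simp add: S_def\<close>)
qed

end




lemma sqD_eq: "s > 0 \<Longrightarrow> sqD s = {x. nrm x < s / 2}"
  unfolding sqD_def nrm_def by (auto simp: abs_less_iff)

lemma closure_sqD: "s > 0 \<Longrightarrow> closure (sqD s) = {x. nrm x \<le> s / 2}"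
proof -
  assume s: "s > 0"
  have "closure (sqD s) = closure {-s/2<..<s/2} \<times> closure {-s/2<..<s/2}" unfolding sqD_def by (rule closure_Times)
  also have "\<dots> = {-s/2..s/2} \<times> {-s/2..s/2}" using s by simp
  also have "\<dots> = {x. nrm x \<le> s / 2}" unfolding nrm_def by (auto simp: abs_le_iff)
  finally show ?thesis .
qed

lemma frontier_sqD: "s > 0 \<Longrightarrow> frontier (sqD s) = {x. nrm x = s / 2}"
proof -
  assume s: "s > 0"
  have o: "open (sqD s)" unfolding sqD_def by (intro open_Times) auto
  have "frontier (sqD s) = closure (sqD s) - sqD s" unfolding frontier_def using interior_open[OF o] by simp
  also have "\<dots> = {x. nrm x = s / 2}" using closure_sqD[OF s] sqD_eq[OF s] by auto
  finally show ?thesis .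
qed

definition rot :: "nat \<Rightarrow> pt \<Rightarrow> pt" where
  "rot j x = (if j mod 4 = 0 then x else if j mod 4 = 1 then (- snd x, fst x)
              else if j mod 4 = 2 then (- fst x, - snd x) else (snd x, - fst x))"

definition R90 :: "pt \<Rightarrow> pt" where "R90 x = (- snd x, fst x)"

lemma rot_Suc: "rot (Suc j) x = rot j (R90 x)"
proof -
  have "j mod 4 = 0 \<or> j mod 4 = 1 \<or> j mod 4 = 2 \<or> j mod 4 = 3" by arith
  moreover have "Suc j mod 4 = (if j mod 4 = 3 then 0 else Suc (j mod 4))" by (simp add: mod_Suc)
  ultimately show ?thesis unfolding rot_def R90_def by (cases x) auto
qed

lemma rot_4: "rot (j + 4) = rot j" unfolding rot_def by (simp add: fun_eq_iff)
lemma rot_0: "rot 0 x = x" unfolding rot_def by simp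
lemma rot_nrm: "nrm (rot j x) = nrm x" unfolding rot_def nrm_def by (auto simp: max_def)
lemma rot_cases: "rot j = (\<lambda>x. x) \<or> rot j = (\<lambda>x. (- snd x, fst x)) \<or> rot j = (\<lambda>x. (- fst x, - snd x)) \<or> rot j = (\<lambda>x. (snd x, - fst x))"
  unfolding rot_def by (auto simp: fun_eq_iff)

lemma rot_dist: "dist (rot j x) (rot j y) = dist x y"
proof -
  have "dist (- snd x, fst x) (- snd y, fst y) = dist x y" "dist (- fst x, - snd x) (- fst y, - snd y) = dist x y"
       "dist (snd x, - fst x) (snd y, - fst y) = dist x y"
    unfolding dist_prod_def dist_real_def by (simp_all add: abs_minus_commute add.commute)
  then show ?thesis using rot_cases[of j] by auto
qed
lemma rot_scale: "rot j (c *\<^sub>R x) = c *\<^sub>R rot j x" unfolding rot_def by (cases x) auto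
lemma j4: "j < (4::nat) \<Longrightarrow> j = 0 \<or> j = 1 \<or> j = 2 \<or> j = 3" by arith

lemma rot_inv: "j < 4 \<Longrightarrow> rot j (rot (4 - j) x) = x"
  by (drule j4) (auto simp: rot_def)
lemma rot_inv2: "j < 4 \<Longrightarrow> rot (4 - j) (rot j x) = x"
  by (drule j4) (auto simp: rot_def)
lemma rot_cont: "continuous (at x) (rot j)"
  using rot_cases[of j] by (elim disjE) (simp_all add: continuous_intros)


lemma piece_exists:
  fixes f g :: "pt \<Rightarrow> pt multiset" and a b Lf Lg de :: real
  assumes ab: "0 < a" "a < b"
    and szf: "\<forall>x. nrm x = a \<longrightarrow> size (f x) = Q" and szg: "\<forall>x. nrm x = b \<longrightarrow> size (g x) = Q"
    and lf: "\<forall>x y. nrm x = a \<longrightarrow> nrm y = a \<longrightarrow> GQ (f x) (f y) \<le> Lf * dist x y"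
    and lg: "\<forall>x y. nrm x = b \<longrightarrow> nrm y = b \<longrightarrow> GQ (g x) (g y) \<le> Lg * dist x y"
    and dd: "\<forall>x. nrm x = a \<longrightarrow> GQ (f x) (g ((b / a) *\<^sub>R x)) \<le> de"
    and nn: "0 \<le> Lf" "0 \<le> Lg" "0 \<le> de"
  shows "\<exists>H. (\<forall>x\<in>rect (-b) a a b. size (H x) = Q) \<and>
   (\<forall>x\<in>rect (-b) a a b. \<forall>x'\<in>rect (-b) a a b. GQ (H x) (H x') \<le> 10 * CQ Q * (Lf + 3 * Lg + de / (b - a)) * dist x x') \<and>
   (\<forall>u\<in>{-a..a}. H (u, a) = f (rot j (u, a))) \<and>
   (\<forall>u\<in>{-b..-a}. H (u, a) = interp (f (rot (Suc j) (a, a))) (g (rot (Suc j) (a, b))) ((- u - a) / (b - a))) \<and>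
   (\<forall>u\<in>{-b..a}. H (u, b) = g (rot j (u, b))) \<and> (\<forall>t\<in>{a..b}. H (-b, t) = g (rot j (-b, t))) \<and>
   (\<forall>t\<in>{a..b}. H (a, t) = interp (f (rot j (a, a))) (g (rot j (a, b))) ((t - a) / (b - a)))"
proof -
  interpret L: LR a b Q "f \<circ> rot j" "g \<circ> rot j" "f \<circ> rot (Suc j)" "g \<circ> rot (Suc j)" Lf Lg de
  proof
    show "0 < a" "a < b" by (rule ab)+
    show "\<And>x. nrm x = a \<Longrightarrow> size ((f \<circ> rot j) x) = Q" "\<And>x. nrm x = a \<Longrightarrow> size ((f \<circ> rot (Suc j)) x) = Q"
      using szf rot_nrm by (metis comp_apply)+
    show "\<And>x. nrm x = b \<Longrightarrow> size ((g \<circ> rot j) x) = Q" "\<And>x. nrm x = b \<Longrightarrow> size ((g \<circ> rot (Suc j)) x) = Q"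
      using szg rot_nrm by (metis comp_apply)+
    show "\<And>x y. nrm x = a \<Longrightarrow> nrm y = a \<Longrightarrow> GQ ((f \<circ> rot j) x) ((f \<circ> rot j) y) \<le> Lf * dist x y"
         "\<And>x y. nrm x = a \<Longrightarrow> nrm y = a \<Longrightarrow> GQ ((f \<circ> rot (Suc j)) x) ((f \<circ> rot (Suc j)) y) \<le> Lf * dist x y"
      using lf rot_nrm rot_dist by (metis comp_apply)+
    show "\<And>x y. nrm x = b \<Longrightarrow> nrm y = b \<Longrightarrow> GQ ((g \<circ> rot j) x) ((g \<circ> rot j) y) \<le> Lg * dist x y"
         "\<And>x y. nrm x = b \<Longrightarrow> nrm y = b \<Longrightarrow> GQ ((g \<circ> rot (Suc j)) x) ((g \<circ> rot (Suc j)) y) \<le> Lg * dist x y"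
      using lg rot_nrm rot_dist by (metis comp_apply)+
    show "\<And>x. nrm x = a \<Longrightarrow> GQ ((f \<circ> rot j) x) ((g \<circ> rot j) ((b / a) *\<^sub>R x)) \<le> de"
         "\<And>x. nrm x = a \<Longrightarrow> GQ ((f \<circ> rot (Suc j)) x) ((g \<circ> rot (Suc j)) ((b / a) *\<^sub>R x)) \<le> de"
      using dd rot_nrm rot_scale by (metis comp_apply)+
    show "0 \<le> Lf" "0 \<le> Lg" "0 \<le> de" by (rule nn)+
    show "(g \<circ> rot j) (- b, a) = (g \<circ> rot (Suc j)) (a, b)" by (simp add: rot_Suc R90_def)
    show "(f \<circ> rot j) (- a, a) = (f \<circ> rot (Suc j)) (a, a)" by (simp add: rot_Suc R90_def)
  qed
  obtain H where H: "\<forall>x\<in>rect (-b) a a b. size (H x) = Q"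
   "\<forall>x\<in>rect (-b) a a b. \<forall>x'\<in>rect (-b) a a b. GQ (H x) (H x') \<le> 10 * CQ Q * L.K0 * dist x x'"
   "\<forall>u\<in>{-b..a}. H (u, a) = L.beta u" "\<forall>u\<in>{-b..a}. H (u, b) = (g \<circ> rot j) (u, b)"
   "\<forall>t\<in>{a..b}. H (-b, t) = (g \<circ> rot j) (-b, t)" "\<forall>t\<in>{a..b}. H (a, t) = L.VV a t"
    using L.LR_main by blast
  show ?thesis
  proof (intro exI[of _ H] conjI)
    show "\<forall>x\<in>rect (-b) a a b. size (H x) = Q" by (rule H(1))
    show "\<forall>x\<in>rect (-b) a a b. \<forall>x'\<in>rect (-b) a a b. GQ (H x) (H x') \<le> 10 * CQ Q * (Lf + 3 * Lg + de / (b - a)) * dist x x'"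
      using H(2) unfolding L.K0_def .
    show "\<forall>u\<in>{-a..a}. H (u, a) = f (rot j (u, a))" using H(3) L.beta_F ab by auto
    show "\<forall>u\<in>{-b..-a}. H (u, a) = interp (f (rot (Suc j) (a, a))) (g (rot (Suc j) (a, b))) ((- u - a) / (b - a))"
      using H(3) ab unfolding L.beta_def by auto
    show "\<forall>u\<in>{-b..a}. H (u, b) = g (rot j (u, b))" using H(4) by simp
    show "\<forall>t\<in>{a..b}. H (-b, t) = g (rot j (-b, t))" using H(5) by simp
    have "L.beta a = f (rot j (a, a))" using L.beta_F ab by simp
    then show "\<forall>t\<in>{a..b}. H (a, t) = interp (f (rot j (a, a))) (g (rot j (a, b))) ((t - a) / (b - a))"
      using H(6) unfolding L.VV_def by simp
  qed
qed


lemma rect_nrm: "c > 0 \<Longrightarrow> rect (-c) c (-c) c = {x. nrm x \<le> c}"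
  unfolding rect_def nrm_def by (auto simp: abs_le_iff)

lemma rbd_nrm: "c > 0 \<Longrightarrow> rbd (-c) c (-c) c = {x. nrm x = c}"
  unfolding rbd_def rect_def nrm_def by (auto simp: abs_le_iff max_def abs_if)

lemma rot_mod: "rot j = rot (j mod 4)" unfolding rot_def by (simp add: fun_eq_iff)

lemma rot_add: "rot i (rot k y) = rot (i + k) y"
proof (induction k arbitrary: y)
  case 0 then show ?case by (simp add: rot_0)
next
  case (Suc k)
  have "rot i (rot (Suc k) y) = rot i (rot k (R90 y))" by (simp add: rot_Suc)
  also have "\<dots> = rot (i + k) (R90 y)" by (rule Suc.IH)
  also have "\<dots> = rot (i + Suc k) y" by (simp add: rot_Suc)
  finally show ?case .
qed

lemma rot_inj: "rot i y = rot i y' \<Longrightarrow> y = y'"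
proof -
  assume h: "rot i y = rot i y'"
  have "i mod 4 < 4" by simp
  then show "y = y'" using h rot_inv2[of "i mod 4"] rot_mod[of i] by metis
qed

lemma assembly:
  fixes f g :: "pt \<Rightarrow> pt multiset" and a b Lf Lg de :: real
  assumes ab: "0 < a" "a < b"
    and szf: "\<forall>x. nrm x = a \<longrightarrow> size (f x) = Q" and szg: "\<forall>x. nrm x = b \<longrightarrow> size (g x) = Q"
    and lf: "\<forall>x y. nrm x = a \<longrightarrow> nrm y = a \<longrightarrow> GQ (f x) (f y) \<le> Lf * dist x y"
    and lg: "\<forall>x y. nrm x = b \<longrightarrow> nrm y = b \<longrightarrow> GQ (g x) (g y) \<le> Lg * dist x y"
    and dd: "\<forall>x. nrm x = a \<longrightarrow> GQ (f x) (g ((b / a) *\<^sub>R x)) \<le> de"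
    and nn: "0 \<le> Lf" "0 \<le> Lg" "0 \<le> de"
  shows "\<exists>h. (\<forall>x. nrm x \<le> b \<longrightarrow> size (h x) = Q) \<and> (\<forall>x. nrm x = b \<longrightarrow> h x = g x) \<and>
     (\<forall>x. nrm x = a \<longrightarrow> h x = f x) \<and>
     (\<forall>x y. nrm x \<le> b \<longrightarrow> nrm y \<le> b \<longrightarrow> GQ (h x) (h y) \<le> 10 * CQ Q * (Lf + 3 * Lg + de / (b - a)) * dist x y)"
proof -
  define K where "K = 10 * CQ Q * (Lf + 3 * Lg + de / (b - a))"
  have Kn: "K \<ge> 0" unfolding K_def using CQ_pos[of Q] nn ab by simp
  have KLf: "CQ Q * Lf \<le> K"
  proof -
    have "Lf \<le> 10 * (Lf + 3 * Lg + de / (b - a))" using nn ab by simp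
    then show ?thesis unfolding K_def using CQ_pos[of Q] by (simp add: mult.assoc mult_left_mono)
  qed
  define hole where "hole = rect (-a) a (-a) a"
  have hole_eq: "hole = {x. nrm x \<le> a}" unfolding hole_def using rect_nrm ab by simp
  have hbd: "rbd (-a) a (-a) a = {x. nrm x = a}" using rbd_nrm ab by simp
  obtain \<Phi>h where Ph: "\<forall>x\<in>hole. size (\<Phi>h x) = Q" "\<forall>y\<in>rbd (-a) a (-a) a. \<Phi>h y = f y"
    "\<forall>x\<in>hole. \<forall>x'\<in>hole. GQ (\<Phi>h x) (\<Phi>h x') \<le> CQ Q * Lf * dist x x'"
  proof -
    have "\<exists>\<Phi>. (\<forall>x\<in>rect (-a) a (-a) a. size (\<Phi> x) = Q) \<and> (\<forall>y\<in>rbd (-a) a (-a) a. \<Phi> y = f y) \<and>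
       (\<forall>x\<in>rect (-a) a (-a) a. \<forall>x'\<in>rect (-a) a (-a) a. GQ (\<Phi> x) (\<Phi> x') \<le> CQ Q * Lf * dist x x')"
      by (rule cone) (use ab nn szf lf hbd in auto)
    then show ?thesis using that unfolding hole_def by blast
  qed
  define U where "U = rect (-b) a a b"
  define PP where "PP = (\<lambda>j H. (\<forall>x\<in>U. size (H x) = Q) \<and>
   (\<forall>x\<in>U. \<forall>x'\<in>U. GQ (H x) (H x') \<le> K * dist x x') \<and>
   (\<forall>u\<in>{-a..a}. H (u, a) = f (rot j (u, a))) \<and>
   (\<forall>u\<in>{-b..-a}. H (u, a) = interp (f (rot (Suc j) (a, a))) (g (rot (Suc j) (a, b))) ((- u - a) / (b - a))) \<and>
   (\<forall>u\<in>{-b..a}. H (u, b) = g (rot j (u, b))) \<and> (\<forall>t\<in>{a..b}. H (-b, t) = g (rot j (-b, t))) \<and>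
   (\<forall>t\<in>{a..b}. H (a, t) = interp (f (rot j (a, a))) (g (rot j (a, b))) ((t - a) / (b - a))))"
  have "\<forall>j. \<exists>H. PP j H"
    using piece_exists[OF ab szf szg lf lg dd nn] unfolding PP_def U_def K_def by blast
  then obtain Hs where Hs: "\<And>j. PP j (Hs j)" by metis
  define Pc where "Pc = (\<lambda>j. {x. rot (4 - j) x \<in> U})"
  have Ua: "snd y \<ge> a" "snd y \<le> b" "fst y \<ge> -b" "fst y \<le> a" if "y \<in> U" for y using that unfolding U_def rect_def by auto
  have C1: "\<Phi>h x = Hs j (rot (4 - j) x)" if "j < 4" "x \<in> hole" "x \<in> Pc j" for j x
  proof -
    define y where "y = rot (4 - j) x"
    have yU: "y \<in> U" using that(3) Pc_def y_def by simp
    have ny: "nrm y \<le> a" using that(2) hole_eq rot_nrm y_def by simp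
    have sy: "snd y = a" "fst y \<in> {-a..a}" using Ua[OF yU] ny unfolding nrm_def by auto
    have yy: "y = (fst y, a)" using sy by (cases y) simp
    have "Hs j y = f (rot j y)" using Hs[of j] sy yy unfolding PP_def by metis
    also have "rot j y = x" unfolding y_def by (rule rot_inv[OF that(1)])
    finally have e: "Hs j y = f x" .
    have "nrm y = a" using sy unfolding nrm_def by auto
    then have "nrm x = a" using rot_nrm[of "4 - j" x] y_def by simp
    then have "x \<in> rbd (-a) a (-a) a" using hbd by simp
    then have "\<Phi>h x = f x" using Ph(2) by blast
    then show ?thesis using e y_def by simp
  qed
  have C2core: "Hs i y = Hs j y'" if "y \<in> U" "y' \<in> U" "y = R90 y'" "rot j = rot (Suc i)" for i j y y'
  proof -
    have e1: "fst y' = a" "snd y' \<in> {a..b}" using Ua[OF that(1)] Ua[OF that(2)] that(3) unfolding R90_def by auto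
    define t where "t = snd y'"
    have y'e: "y' = (a, t)" using e1 t_def by (cases y') auto
    have ye: "y = (-t, a)" using that(3) y'e unfolding R90_def by simp
    have tt: "t \<in> {a..b}" "-t \<in> {-b..-a}" using e1 t_def by auto
    have "Hs i y = interp (f (rot (Suc i) (a, a))) (g (rot (Suc i) (a, b))) ((- (-t) - a) / (b - a))"
      using Hs[of i] tt ye unfolding PP_def by metis
    moreover have "Hs j y' = interp (f (rot j (a, a))) (g (rot j (a, b))) ((t - a) / (b - a))"
      using Hs[of j] tt y'e unfolding PP_def by metis
    ultimately show ?thesis using that(4) by simp
  qed
  have C2: "Hs i (rot (4 - i) x) = Hs j (rot (4 - j) x)" if "i < 4" "j < 4" "x \<in> Pc i" "x \<in> Pc j" for i j x
  proof -
    define yi where "yi = rot (4 - i) x"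
    define yj where "yj = rot (4 - j) x"
    have U2: "yi \<in> U" "yj \<in> U" using that Pc_def yi_def yj_def by auto
    have xe: "rot i yi = x" "rot j yj = x" unfolding yi_def yj_def using rot_inv that by auto
    have cs: "i = j \<or> j = Suc i mod 4 \<or> i = Suc j mod 4 \<or> j = (i + 2) mod 4" using j4[OF that(1)] j4[OF that(2)] by auto
    show ?thesis
    proof -
      { assume "i = j" then have ?thesis by simp }
      moreover
      { assume h: "j = Suc i mod 4"
        then have rj: "rot j = rot (Suc i)" using rot_mod[of "Suc i"] by simp
        have "rot i yi = rot i (R90 yj)" using xe rj rot_Suc[of i yj] by simp
        then have "yi = R90 yj" by (rule rot_inj)
        then have ?thesis using C2core[OF U2 _ rj] unfolding yi_def yj_def by simp }
      moreover
      { assume h: "i = Suc j mod 4"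
        then have ri: "rot i = rot (Suc j)" using rot_mod[of "Suc j"] by simp
        have "rot j yj = rot j (R90 yi)" using xe ri rot_Suc[of j yi] by simp
        then have "yj = R90 yi" by (rule rot_inj)
        then have ?thesis using C2core[OF U2(2) U2(1) _ ri] unfolding yi_def yj_def by simp }
      moreover
      { assume h: "j = (i + 2) mod 4"
        then have rj: "rot j = rot (i + 2)" using rot_mod[of "i + 2"] by simp
        have "rot i yi = rot i (rot 2 yj)" using xe rj rot_add[of i 2 yj] by simp
        then have "yi = rot 2 yj" by (rule rot_inj)
        then have "snd yi = - snd yj" unfolding rot_def by simp
        then have False using Ua[OF U2(1)] Ua[OF U2(2)] ab by simp
        then have ?thesis by simp }
      ultimately show ?thesis using cs by blast
    qed
  qed
  define h where "h = (\<lambda>x. if x \<in> hole then \<Phi>h x else Hs (SOME j. j < 4 \<and> x \<in> Pc j) (rot (4 - (SOME j. j < 4 \<and> x \<in> Pc j)) x))"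
  have h_hole: "h x = \<Phi>h x" if "x \<in> hole" for x using that h_def by simp
  have h_Pc: "h x = Hs j (rot (4 - j) x)" if "j < 4" "x \<in> Pc j" for j x
  proof (cases "x \<in> hole")
    case True then show ?thesis using C1[OF that(1) True that(2)] h_def by simp
  next
    case False
    define j' where "j' = (SOME j. j < 4 \<and> x \<in> Pc j)"
    have "j' < 4 \<and> x \<in> Pc j'" unfolding j'_def by (rule someI[of _ j]) (use that in simp)
    then have "Hs j' (rot (4 - j') x) = Hs j (rot (4 - j) x)" using C2 that by blast
    then show ?thesis using False h_def j'_def by simp
  qed
  define S where "S = rect (-b) b (-b) b"
  have S_eq: "S = {x. nrm x \<le> b}" unfolding S_def using rect_nrm ab by simp
  have cover: "x \<in> hole \<or> (\<exists>j<4. x \<in> Pc j)" if "nrm x \<le> b" for x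
  proof (cases "nrm x \<le> a")
    case True then show ?thesis using hole_eq by simp
  next
    case False
    obtain x1 x2 where x: "x = (x1, x2)" by (cases x)
    have b1: "\<bar>x1\<bar> \<le> b" "\<bar>x2\<bar> \<le> b" "\<bar>x1\<bar> > a \<or> \<bar>x2\<bar> > a" using that False x unfolding nrm_def by auto
    have P0: "x \<in> Pc 0 \<longleftrightarrow> x1 \<in> {-b..a} \<and> x2 \<in> {a..b}" unfolding Pc_def U_def rect_def x rot_def by simp
    have P1: "x \<in> Pc 1 \<longleftrightarrow> x2 \<in> {-b..a} \<and> - x1 \<in> {a..b}" unfolding Pc_def U_def rect_def x rot_def by simp
    have P2: "x \<in> Pc 2 \<longleftrightarrow> - x1 \<in> {-b..a} \<and> - x2 \<in> {a..b}" unfolding Pc_def U_def rect_def x rot_def by simp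
    have P3: "x \<in> Pc 3 \<longleftrightarrow> - x2 \<in> {-b..a} \<and> x1 \<in> {a..b}" unfolding Pc_def U_def rect_def x rot_def by simp
    have "x \<in> Pc 0 \<or> x \<in> Pc 1 \<or> x \<in> Pc 2 \<or> x \<in> Pc 3" unfolding P0 P1 P2 P3 using b1 ab by auto
    moreover have "(0::nat) < 4" "(1::nat) < 4" "(2::nat) < 4" "(3::nat) < 4" by simp_all
    ultimately show ?thesis by blast
  qed
  have szh: "size (h x) = Q" if nb: "nrm x \<le> b" for x
  proof -
    consider "x \<in> hole" | j where "j < 4" "x \<in> Pc j" using cover[OF nb] by blast
    then show ?thesis
    proof cases
      case 1 then show ?thesis using h_hole Ph(1) by simp
    next
      case 2 then show ?thesis using h_Pc Hs[of j] unfolding PP_def Pc_def by auto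
    qed
  qed
  have lip: "GQ (h x) (h y) \<le> K * dist x y" if "nrm x \<le> b" "nrm y \<le> b" for x y
  proof (rule plane_glue[where F="insert hole (Pc ` {..<4})" and S=S and Q=Q])
    show "convex S" unfolding S_def rect_def by (intro convex_Times) auto
    show "finite (insert hole (Pc ` {..<4}))" by simp
    show "\<forall>P\<in>insert hole (Pc ` {..<4}). closed P"
    proof
      fix P assume "P \<in> insert hole (Pc ` {..<4})"
      moreover have "closed hole" unfolding hole_def rect_def by (intro closed_Times) auto
      moreover have "closed (Pc j)" for j
      proof -
        have "Pc j = rot (4 - j) -` U" unfolding Pc_def by auto
        moreover have "closed U" unfolding U_def rect_def by (intro closed_Times) auto
        ultimately show ?thesis using continuous_closed_vimage rot_cont by metis
      qed
      ultimately show "closed P" by auto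
    qed
    show "S \<subseteq> \<Union> (insert hole (Pc ` {..<4}))" using cover S_eq by blast
    show "0 \<le> K" by (rule Kn)
    show "\<forall>P\<in>insert hole (Pc ` {..<4}). \<forall>x\<in>P \<inter> S. \<forall>y\<in>P \<inter> S. GQ (h x) (h y) \<le> K * dist x y"
    proof (intro ballI)
      fix P x y assume P: "P \<in> insert hole (Pc ` {..<4})" and x: "x \<in> P \<inter> S" and y: "y \<in> P \<inter> S"
      show "GQ (h x) (h y) \<le> K * dist x y"
      proof (cases "P = hole")
        case True
        then have "GQ (h x) (h y) \<le> CQ Q * Lf * dist x y" using x y h_hole Ph(3) by auto
        also have "\<dots> \<le> K * dist x y" using KLf by (intro mult_right_mono) auto
        finally show ?thesis .
      next
        case False
        then obtain j where j: "j < 4" "P = Pc j" using P by auto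
        have "GQ (h x) (h y) = GQ (Hs j (rot (4 - j) x)) (Hs j (rot (4 - j) y))" using h_Pc j x y by simp
        also have "\<dots> \<le> K * dist (rot (4 - j) x) (rot (4 - j) y)" using Hs[of j] x y j unfolding PP_def Pc_def by auto
        also have "\<dots> = K * dist x y" by (simp add: rot_dist)
        finally show ?thesis .
      qed
    qed
    show "\<forall>x\<in>S. size (h x) = Q" using szh S_eq by simp
  qed (use that S_eq in auto)
  have outer: "h x = g x" if nb: "nrm x = b" for x
  proof -
    have nh: "x \<notin> hole" using nb hole_eq ab by simp
    then obtain j where j: "j < 4" "x \<in> Pc j" using cover[of x] nb by auto
    define y where "y = rot (4 - j) x"
    have yU: "y \<in> U" using j Pc_def y_def by simp
    have ny: "nrm y = b" using nb rot_nrm y_def by simp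
    have "snd y = b \<or> fst y = -b" using Ua[OF yU] ny ab unfolding nrm_def by (auto simp: max_def abs_if split: if_splits)
    then have "Hs j y = g (rot j y)"
    proof
      assume "snd y = b"
      then show ?thesis using Hs[of j] Ua[OF yU] unfolding PP_def by (metis atLeastAtMost_iff prod.collapse)
    next
      assume "fst y = -b"
      then show ?thesis using Hs[of j] Ua[OF yU] unfolding PP_def by (metis atLeastAtMost_iff prod.collapse)
    qed
    also have "rot j y = x" unfolding y_def by (rule rot_inv[OF j(1)])
    finally show ?thesis using h_Pc j y_def by simp
  qed
  have inner: "h x = f x" if "nrm x = a" for x
  proof -
    have "x \<in> rbd (-a) a (-a) a" using hbd that by simp
    then have "\<Phi>h x = f x" using Ph(2) by blast
    moreover have "x \<in> hole" using hole_eq that by simp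
    ultimately show ?thesis using h_hole by simp
  qed
  show ?thesis
  proof (intro exI[of _ h] conjI allI impI)
    fix x assume "nrm x \<le> b" then show "size (h x) = Q" by (rule szh)
  next
    fix x assume "nrm x = b" then show "h x = g x" by (rule outer)
  next
    fix x assume "nrm x = a" then show "h x = f x" by (rule inner)
  next
    fix x y assume "nrm x \<le> b" "nrm y \<le> b"
    then show "GQ (h x) (h y) \<le> 10 * CQ Q * (Lf + 3 * Lg + de / (b - a)) * dist x y" using lip unfolding K_def by blast
  qed
qed






theorem mainTheorem7:
  fixes Q :: nat
  shows "\<exists>C>0. \<forall>r \<sigma> (g :: pt \<Rightarrow> pt multiset) (f :: pt \<Rightarrow> pt multiset) Lg Lf.
    r > 0 \<longrightarrow> 0 < \<sigma> \<longrightarrow> \<sigma> < 1 \<longrightarrow>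
    g ` frontier (sqD ((1 + \<sigma>) * r)) \<subseteq> AQ Q \<longrightarrow>
    f ` frontier (sqD r) \<subseteq> AQ Q \<longrightarrow>
    lipschitz_AQ (frontier (sqD ((1 + \<sigma>) * r))) g Lg \<longrightarrow>
    lipschitz_AQ (frontier (sqD r)) f Lf \<longrightarrow>
    (\<exists>h :: pt \<Rightarrow> pt multiset.
       h ` (closure (sqD ((1 + \<sigma>) * r)) - sqD r) \<subseteq> AQ Q \<and>
       (\<forall>x\<in>frontier (sqD ((1 + \<sigma>) * r)). h x = g x) \<and>
       (\<forall>x\<in>frontier (sqD r). h x = f x) \<and>
       lipschitz_AQ (closure (sqD ((1 + \<sigma>) * r)) - sqD r) h
         (C * (Lf + Lg + (1 / (\<sigma> * r)) *
            (SUP x\<in>frontier (sqD r). GQ (f x) (g ((1 + \<sigma>) *\<^sub>R x))))))"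
proof (intro exI[of _ "30 * CQ Q"] conjI allI impI)
  show "0 < 30 * CQ Q" using CQ_pos[of Q] by simp
  fix r \<sigma> :: real and g f :: "pt \<Rightarrow> pt multiset" and Lg Lf :: real
  assume r: "r > 0" and s0: "0 < \<sigma>" and s1: "\<sigma> < 1"
    and gA: "g ` frontier (sqD ((1 + \<sigma>) * r)) \<subseteq> AQ Q" and fA: "f ` frontier (sqD r) \<subseteq> AQ Q"
    and gL: "lipschitz_AQ (frontier (sqD ((1 + \<sigma>) * r))) g Lg" and fL: "lipschitz_AQ (frontier (sqD r)) f Lf"
  define a where "a = r / 2"
  define b where "b = (1 + \<sigma>) * r / 2"
  have ab: "0 < a" "a < b" unfolding a_def b_def using r s0 by (auto simp: field_simps)
  have ba: "b / a = 1 + \<sigma>" unfolding a_def b_def using r by simp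
  have fr: "frontier (sqD r) = {x. nrm x = a}" unfolding frontier_sqD[OF r] a_def ..
  have r2: "(1 + \<sigma>) * r > 0" using r s0 by simp
  have fR: "frontier (sqD ((1 + \<sigma>) * r)) = {x. nrm x = b}" unfolding frontier_sqD[OF r2] b_def ..
  have ann: "closure (sqD ((1 + \<sigma>) * r)) - sqD r = {x. a \<le> nrm x \<and> nrm x \<le> b}"
    unfolding closure_sqD[OF r2] sqD_eq[OF r] a_def b_def by auto
  have szf: "\<forall>x. nrm x = a \<longrightarrow> size (f x) = Q" using fA fr unfolding AQ_def by auto
  have szg: "\<forall>x. nrm x = b \<longrightarrow> size (g x) = Q" using gA fR unfolding AQ_def by auto
  have lf: "\<forall>x y. nrm x = a \<longrightarrow> nrm y = a \<longrightarrow> GQ (f x) (f y) \<le> Lf * dist x y"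
    using fL fr unfolding lipschitz_AQ_def by auto
  have lg: "\<forall>x y. nrm x = b \<longrightarrow> nrm y = b \<longrightarrow> GQ (g x) (g y) \<le> Lg * dist x y"
    using gL fR unfolding lipschitz_AQ_def by auto
  have Lnn: "0 \<le> L" if sz: "\<forall>x. nrm x = c \<longrightarrow> size (k x) = Q"
     and l: "\<forall>x y. nrm x = c \<longrightarrow> nrm y = c \<longrightarrow> GQ (k x) (k y) \<le> L * dist x y" and c: "c > 0" for k c L
  proof -
    have n: "nrm (c, 0) = c" "nrm (-c, 0) = c" unfolding nrm_def using c by auto
    have s1: "size (k (c, 0)) = Q" using sz n(1) by blast
    have s2: "size (k (-c, 0)) = Q" using sz n(2) by blast
    have "0 \<le> GQ (k (c, 0)) (k (-c, 0))" using GQ_nonneg[of "k (-c, 0)" "k (c, 0)"] s1 s2 by simp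
    also have "\<dots> \<le> L * dist (c, 0::real) (-c, 0::real)" using l[rule_format, OF n(1) n(2)] .
    also have "dist (c, 0) (-c, (0::real)) = 2 * c" using c dist_same_snd[of "(c, 0::real)" "(-c, 0::real)"] by simp
    finally have "0 \<le> L * (2 * c)" .
    then show ?thesis using c by (simp add: zero_le_mult_iff)
  qed
  have Lfn: "0 \<le> Lf" by (rule Lnn[OF szf lf ab(1)])
  have Lgn: "0 \<le> Lg" using Lnn[OF szg lg] ab by simp
  define de where "de = (SUP x\<in>frontier (sqD r). GQ (f x) (g ((1 + \<sigma>) *\<^sub>R x)))"
  define p where "p = (a, 0::real)"
  have np: "nrm p = a" unfolding p_def nrm_def using ab by simp
  have nscale: "nrm ((1 + \<sigma>) *\<^sub>R x) = b" if "nrm x = a" for x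
  proof -
    have "nrm ((1 + \<sigma>) *\<^sub>R x) = (1 + \<sigma>) * nrm x" unfolding nrm_def using s0 by (simp add: abs_mult max_mult_distrib_left)
    then show ?thesis using that ba ab by (simp add: field_simps)
  qed
  have dnr: "dist x y \<le> 4 * c" if "nrm x = c" "nrm y = c" for x y c
  proof -
    have "\<bar>fst x - fst y\<bar> \<le> 2 * c" "\<bar>snd x - snd y\<bar> \<le> 2 * c" using that unfolding nrm_def by (auto simp: max_def split: if_splits)
    then show ?thesis using dist_le_abs[of x y] by linarith
  qed
  have bdd: "bdd_above ((\<lambda>x. GQ (f x) (g ((1 + \<sigma>) *\<^sub>R x))) ` frontier (sqD r))"
  proof (rule bdd_aboveI2)
    fix x assume "x \<in> frontier (sqD r)"
    then have nx: "nrm x = a" using fr by simp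
    have n1: "nrm ((1 + \<sigma>) *\<^sub>R x) = b" "nrm ((1 + \<sigma>) *\<^sub>R p) = b" using nscale nx np by auto
    have sz: "size (f x) = Q" "size (f p) = Q" "size (g ((1 + \<sigma>) *\<^sub>R x)) = Q" "size (g ((1 + \<sigma>) *\<^sub>R p)) = Q"
      using szf[rule_format, OF nx] szf[rule_format, OF np] szg[rule_format, OF n1(1)] szg[rule_format, OF n1(2)] by auto
    have "GQ (f x) (g ((1 + \<sigma>) *\<^sub>R x)) \<le> GQ (f x) (f p) + GQ (f p) (g ((1 + \<sigma>) *\<^sub>R x))"
      by (rule GQ_triangle) (use sz in auto)
    also have "GQ (f p) (g ((1 + \<sigma>) *\<^sub>R x)) \<le> GQ (f p) (g ((1 + \<sigma>) *\<^sub>R p)) + GQ (g ((1 + \<sigma>) *\<^sub>R p)) (g ((1 + \<sigma>) *\<^sub>R x))"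
      by (rule GQ_triangle) (use sz in auto)
    also have "GQ (f x) (f p) \<le> Lf * (4 * a)"
    proof -
      have "GQ (f x) (f p) \<le> Lf * dist x p" using lf[rule_format, OF nx np] .
      also have "\<dots> \<le> Lf * (4 * a)" using dnr[OF nx np] Lfn by (rule mult_left_mono)
      finally show ?thesis .
    qed
    also have "GQ (g ((1 + \<sigma>) *\<^sub>R p)) (g ((1 + \<sigma>) *\<^sub>R x)) \<le> Lg * (4 * b)"
    proof -
      have "GQ (g ((1 + \<sigma>) *\<^sub>R p)) (g ((1 + \<sigma>) *\<^sub>R x)) \<le> Lg * dist ((1 + \<sigma>) *\<^sub>R p) ((1 + \<sigma>) *\<^sub>R x)"
        using lg[rule_format, OF n1(2) n1(1)] .
      also have "\<dots> \<le> Lg * (4 * b)" using dnr[OF n1(2) n1(1)] Lgn by (rule mult_left_mono)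
      finally show ?thesis .
    qed
    finally show "GQ (f x) (g ((1 + \<sigma>) *\<^sub>R x)) \<le> Lf * (4 * a) + (GQ (f p) (g ((1 + \<sigma>) *\<^sub>R p)) + Lg * (4 * b))"
      by simp
  qed
  have dd0: "GQ (f x) (g ((1 + \<sigma>) *\<^sub>R x)) \<le> de" if "nrm x = a" for x
    unfolding de_def using bdd that fr by (intro cSUP_upper) auto
  have dd: "\<forall>x. nrm x = a \<longrightarrow> GQ (f x) (g ((b / a) *\<^sub>R x)) \<le> de" using dd0 ba by simp
  have den: "0 \<le> de"
  proof -
    have "size (g ((1 + \<sigma>) *\<^sub>R p)) = size (f p)" using szf[rule_format, OF np] szg[rule_format, OF nscale[OF np]] by simp
    then have "0 \<le> GQ (f p) (g ((1 + \<sigma>) *\<^sub>R p))" by (rule GQ_nonneg)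
    then show ?thesis using dd0[OF np] by linarith
  qed
  obtain h where h: "\<forall>x. nrm x \<le> b \<longrightarrow> size (h x) = Q" "\<forall>x. nrm x = b \<longrightarrow> h x = g x"
     "\<forall>x. nrm x = a \<longrightarrow> h x = f x"
     "\<forall>x y. nrm x \<le> b \<longrightarrow> nrm y \<le> b \<longrightarrow> GQ (h x) (h y) \<le> 10 * CQ Q * (Lf + 3 * Lg + de / (b - a)) * dist x y"
    using assembly[OF ab szf szg lf lg dd Lfn Lgn den] by blast
  show "\<exists>h :: pt \<Rightarrow> pt multiset.
       h ` (closure (sqD ((1 + \<sigma>) * r)) - sqD r) \<subseteq> AQ Q \<and>
       (\<forall>x\<in>frontier (sqD ((1 + \<sigma>) * r)). h x = g x) \<and>
       (\<forall>x\<in>frontier (sqD r). h x = f x) \<and>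
       lipschitz_AQ (closure (sqD ((1 + \<sigma>) * r)) - sqD r) h
         (30 * CQ Q * (Lf + Lg + (1 / (\<sigma> * r)) *
            (SUP x\<in>frontier (sqD r). GQ (f x) (g ((1 + \<sigma>) *\<^sub>R x)))))"
  proof (intro exI[of _ h] conjI)
    show "h ` (closure (sqD ((1 + \<sigma>) * r)) - sqD r) \<subseteq> AQ Q" using h(1) ann unfolding AQ_def by auto
    show "\<forall>x\<in>frontier (sqD ((1 + \<sigma>) * r)). h x = g x" using h(2) fR by auto
    show "\<forall>x\<in>frontier (sqD r). h x = f x" using h(3) fr by auto
    have wq: "de / (b - a) = 2 * ((1 / (\<sigma> * r)) * de)" unfolding a_def b_def using r s0 by (simp add: field_simps)
    have X: "0 \<le> (1 / (\<sigma> * r)) * de" using r s0 den by simp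
    have KK: "10 * CQ Q * (Lf + 3 * Lg + de / (b - a)) \<le> 30 * CQ Q * (Lf + Lg + (1 / (\<sigma> * r)) * de)"
    proof -
      have "Lf + 3 * Lg + de / (b - a) \<le> 3 * (Lf + Lg + (1 / (\<sigma> * r)) * de)" unfolding wq using Lfn X by simp
      then show ?thesis using CQ_pos[of Q] by simp
    qed
    show "lipschitz_AQ (closure (sqD ((1 + \<sigma>) * r)) - sqD r) h
         (30 * CQ Q * (Lf + Lg + (1 / (\<sigma> * r)) * (SUP x\<in>frontier (sqD r). GQ (f x) (g ((1 + \<sigma>) *\<^sub>R x)))))"
      unfolding lipschitz_AQ_def de_def[symmetric]
    proof (intro ballI)
      fix x y assume "x \<in> closure (sqD ((1 + \<sigma>) * r)) - sqD r" "y \<in> closure (sqD ((1 + \<sigma>) * r)) - sqD r"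
      then have "nrm x \<le> b" "nrm y \<le> b" using ann by auto
      then have "GQ (h x) (h y) \<le> 10 * CQ Q * (Lf + 3 * Lg + de / (b - a)) * dist x y" using h(4) by blast
      also have "\<dots> \<le> 30 * CQ Q * (Lf + Lg + (1 / (\<sigma> * r)) * de) * dist x y" using KK by (intro mult_right_mono) auto
      finally show "GQ (h x) (h y) \<le> 30 * CQ Q * (Lf + Lg + 1 / (\<sigma> * r) * de) * dist x y" .
    qed
  qed
qed


end
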